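(* Let $\varphi$ be a $w^*$-continuous positive linear map on $B(\mathcal H)$. The following are equivalent: (i) $\varphi$ is similar to a $w^*$-continuous positive linear map $\lambda$ on $B(\mathcal H)$ with $\lambda(I)=I$; (ii) there are constants $0<a\le b$ with $aI\le\frac{\varphi^0(I)+\cdots+\varphi^{k-1}(I)}{k}\le bI$ for all $k\in\mathbb N$; (iii) there are constants $0<a\le b$ and an invertible positive $P\in B(\mathcal H)$ with $aI\le\frac{\varphi^0(P)+\cdots+\varphi^{k-1}(P)}{k}\le bI$ for all $k\in\mathbb N$; (iv) there are constants $0<c\le d$ with $cI\le\varphi^k(I)\le dI$ for all $k\in\mathbb N$; (v) there are constants $0<c\le d$ and an invertible positive $R\in B(\mathcal H)$ with $cI\le\varphi^k(R)\le dI$ for all $k\in\mathbb N$; (vi) there is an invertible positive $Q\in B(\mathcal H)$ with $\varphi(Q)=Q$. Moreover, the operator $Q$ in (vi) can be chosen such that $aI\le Q\le bI$ (with $a,b$ as in (iii)).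
   Context: Two linear maps $\varphi,\lambda:B(\mathcal H)\to B(\mathcal H)$ are similar if there is an invertible $R\in B(\mathcal H)$ with $\varphi(RXR^* )=R\lambda(X)R^*$ for all $X\in B(\mathcal H)$. $\varphi^0$ is the identity map. *)

theory Defs
  imports "HOL-Analysis.Analysis" "HOL-Library.Complex_Order"
begin

text \<open>A complex Hilbert space is modelled as a real Hilbert space (real inner product
space, complete) equipped with an orthogonal complex structure J (multiplication by i).
Complex scalar multiplication and the complex inner product (linear in the second
argument) are derived from it.\<close>

class complex_hilbert = real_inner + complete_space +
  fixes cJ :: "'a \<Rightarrow> 'a"
  assumes cJ_add: "cJ (x + y) = cJ x + cJ y"
    and cJ_scaleR: "cJ (r *\<^sub>R x) = r *\<^sub>R cJ x"
    and cJ_cJ: "cJ (cJ x) = - x"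
    and cJ_inner: "inner (cJ x) (cJ y) = inner x y"

definition cscale :: "complex \<Rightarrow> 'a::complex_hilbert \<Rightarrow> 'a" where
  "cscale c x = Re c *\<^sub>R x + Im c *\<^sub>R cJ x"

definition cinner :: "'a::complex_hilbert \<Rightarrow> 'a \<Rightarrow> complex" where
  "cinner x y = Complex (inner x y) (inner (cJ x) y)"

text \<open>Bounded complex-linear operators.\<close>
definition bop :: "('a::complex_hilbert \<Rightarrow> 'a) \<Rightarrow> bool" where
  "bop T \<longleftrightarrow> bounded_linear T \<and> (\<forall>x. T (cJ x) = cJ (T x))"

definition BH :: "('a::complex_hilbert \<Rightarrow> 'a) set" where
  "BH = {T. bop T}"

definition op_id :: "'a::complex_hilbert \<Rightarrow> 'a" where
  "op_id = (\<lambda>x. x)"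

definition op_scal :: "real \<Rightarrow> 'a::complex_hilbert \<Rightarrow> 'a" where
  "op_scal a = (\<lambda>x. a *\<^sub>R x)"

definition adjoint :: "('a::complex_hilbert \<Rightarrow> 'a) \<Rightarrow> ('a \<Rightarrow> 'a)" where
  "adjoint T = (SOME S. bop S \<and> (\<forall>x y. cinner (T x) y = cinner x (S y)))"

definition op_le :: "('a::complex_hilbert \<Rightarrow> 'a) \<Rightarrow> ('a \<Rightarrow> 'a) \<Rightarrow> bool" where
  "op_le X Y \<longleftrightarrow> (\<forall>x. cinner x (X x) \<le> cinner x (Y x))"

definition positive_op :: "('a::complex_hilbert \<Rightarrow> 'a) \<Rightarrow> bool" where
  "positive_op X \<longleftrightarrow> bop X \<and> op_le (\<lambda>x. 0) X"

definition invertible_op :: "('a::complex_hilbert \<Rightarrow> 'a) \<Rightarrow> bool" where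
  "invertible_op R \<longleftrightarrow> bop R \<and> (\<exists>S. bop S \<and> S \<circ> R = id \<and> R \<circ> S = id)"

definition linear_map :: "(('a::complex_hilbert \<Rightarrow> 'a) \<Rightarrow> ('a \<Rightarrow> 'a)) \<Rightarrow> bool" where
  "linear_map \<phi> \<longleftrightarrow> (\<forall>X\<in>BH. \<phi> X \<in> BH) \<and>
     (\<forall>X\<in>BH. \<forall>Y\<in>BH. \<forall>c. \<phi> (\<lambda>x. cscale c (X x) + Y x) = (\<lambda>x. cscale c (\<phi> X x) + \<phi> Y x))"

definition positive_map :: "(('a::complex_hilbert \<Rightarrow> 'a) \<Rightarrow> ('a \<Rightarrow> 'a)) \<Rightarrow> bool" where
  "positive_map \<phi> \<longleftrightarrow> (\<forall>X\<in>BH. positive_op X \<longrightarrow> positive_op (\<phi> X))"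

text \<open>The weak* (sigma-weak) topology on B(H): the weakest topology on B(H) making all
normal functionals X \<mapsto> \<Sum>n \<langle>x_n, X y_n\<rangle> with \<Sum>\<parallel>x_n\<parallel>^2, \<Sum>\<parallel>y_n\<parallel>^2 < \<infinity> continuous.\<close>
definition sw_functional :: "(nat \<Rightarrow> 'a::complex_hilbert) \<Rightarrow> (nat \<Rightarrow> 'a) \<Rightarrow> ('a \<Rightarrow> 'a) \<Rightarrow> complex" where
  "sw_functional xs ys X = (\<Sum>n. cinner (xs n) (X (ys n)))"

definition wstar_top :: "('a::complex_hilbert \<Rightarrow> 'a) topology" where
  "wstar_top = topology_generated_by
     (insert BH {{X \<in> BH. sw_functional xs ys X \<in> U} | xs ys U.
        summable (\<lambda>n. (norm (xs n))\<^sup>2) \<and> summable (\<lambda>n. (norm (ys n))\<^sup>2) \<and> open U})"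

definition wstar_continuous :: "(('a::complex_hilbert \<Rightarrow> 'a) \<Rightarrow> ('a \<Rightarrow> 'a)) \<Rightarrow> bool" where
  "wstar_continuous \<phi> \<longleftrightarrow> continuous_map wstar_top wstar_top \<phi>"

definition wstar_pos_linear :: "(('a::complex_hilbert \<Rightarrow> 'a) \<Rightarrow> ('a \<Rightarrow> 'a)) \<Rightarrow> bool" where
  "wstar_pos_linear \<phi> \<longleftrightarrow> linear_map \<phi> \<and> positive_map \<phi> \<and> wstar_continuous \<phi>"

definition similar :: "(('a::complex_hilbert \<Rightarrow> 'a) \<Rightarrow> ('a \<Rightarrow> 'a)) \<Rightarrow> (('a \<Rightarrow> 'a) \<Rightarrow> ('a \<Rightarrow> 'a)) \<Rightarrow> bool" where
  "similar \<phi> \<mu> \<longleftrightarrow> (\<exists>R. invertible_op R \<and>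
      (\<forall>X\<in>BH. \<phi> (R \<circ> X \<circ> adjoint R) = R \<circ> \<mu> X \<circ> adjoint R))"

definition cesaro :: "(('a::complex_hilbert \<Rightarrow> 'a) \<Rightarrow> ('a \<Rightarrow> 'a)) \<Rightarrow> nat \<Rightarrow> ('a \<Rightarrow> 'a) \<Rightarrow> ('a \<Rightarrow> 'a)" where
  "cesaro \<phi> k P = (\<lambda>x. (1 / real k) *\<^sub>R (\<Sum>j<k. (\<phi> ^^ j) P x))"

end

theory Submission
  imports Defs "HOL-Computational_Algebra.Formal_Power_Series"
begin

lemma inner_cJ_self[simp]: "inner (cJ x) (x::'a::complex_hilbert) = 0"
  by (metis cJ_cJ cJ_inner inner_commute inner_minus_left neg_equal_zero)

lemma inner_self_cJ[simp]: "inner x (cJ (x::'a::complex_hilbert)) = 0"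
  by (metis inner_cJ_self inner_commute)

lemma cJ_zero[simp]: "cJ (0::'a::complex_hilbert) = 0"
  using cJ_scaleR[of 0 "0::'a"] by simp

lemma cJ_minus: "cJ (- x) = - cJ (x::'a::complex_hilbert)"
  using cJ_scaleR[of "-1" x] by simp

lemma cJ_diff: "cJ (x - y) = cJ x - cJ (y::'a::complex_hilbert)"
  by (metis cJ_add cJ_minus diff_conv_add_uminus)

lemma norm_cJ[simp]: "norm (cJ x) = norm (x::'a::complex_hilbert)"
  by (simp add: norm_eq_sqrt_inner cJ_inner)

lemma bounded_linear_cJ: "bounded_linear (cJ :: 'a::complex_hilbert \<Rightarrow> 'a)"
  by (rule bounded_linear_intro[where K=1]) (auto simp: cJ_add cJ_scaleR)

lemma inner_cJ_left: "inner (cJ x) y = - inner x (cJ (y::'a::complex_hilbert))"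
  by (metis cJ_cJ cJ_inner inner_minus_left)

lemma cJ_sum: "cJ (sum f A) = (\<Sum>i\<in>A. cJ (f i :: 'a::complex_hilbert))"
  using linear_sum[OF bounded_linear.linear[OF bounded_linear_cJ]] by blast

lemma cscale_add_left: "cscale (a + b) x = cscale a x + cscale b (x::'a::complex_hilbert)"
  by (simp add: cscale_def algebra_simps)

lemma cscale_add_right: "cscale a (x + y) = cscale a x + cscale a (y::'a::complex_hilbert)"
  by (simp add: cscale_def algebra_simps cJ_add)

lemma cscale_diff_right: "cscale a (x - y) = cscale a x - cscale a (y::'a::complex_hilbert)"
  by (simp add: cscale_def algebra_simps cJ_diff)

lemma cscale_minus_right: "cscale a (- y) = - cscale a (y::'a::complex_hilbert)"
  by (simp add: cscale_def algebra_simps cJ_minus)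

lemma cscale_mult: "cscale (a * b) x = cscale a (cscale b (x::'a::complex_hilbert))"
  by (simp add: cscale_def algebra_simps cJ_add cJ_scaleR cJ_cJ)

lemma cscale_one[simp]: "cscale 1 x = (x::'a::complex_hilbert)"
  by (simp add: cscale_def)

lemma cscale_zero_left[simp]: "cscale 0 x = (0::'a::complex_hilbert)"
  by (simp add: cscale_def)

lemma cscale_zero_right[simp]: "cscale a 0 = (0::'a::complex_hilbert)"
  by (simp add: cscale_def)

lemma cscale_of_real[simp]: "cscale (of_real r) x = r *\<^sub>R (x::'a::complex_hilbert)"
  by (simp add: cscale_def)

lemma cscale_ii: "cscale \<i> x = cJ (x::'a::complex_hilbert)"
  by (simp add: cscale_def)

lemma cscale_minus_one: "cscale (-1) x = - (x::'a::complex_hilbert)"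
  by (simp add: cscale_def)

lemma cJ_cscale: "cJ (cscale a x) = cscale a (cJ (x::'a::complex_hilbert))"
  by (simp add: cscale_def cJ_add cJ_scaleR)

lemma cscale_scaleR: "cscale a (r *\<^sub>R x) = r *\<^sub>R cscale a (x::'a::complex_hilbert)"
  by (simp add: cscale_def cJ_scaleR algebra_simps)

lemma cscale_sum: "cscale a (sum f A) = (\<Sum>i\<in>A. cscale a (f i :: 'a::complex_hilbert))"
  by (simp add: cscale_def cJ_sum scaleR_sum_right sum.distrib)

lemma bounded_linear_cscale: "bounded_linear (cscale a :: 'a::complex_hilbert \<Rightarrow> 'a)"
  unfolding cscale_def
  by (intro bounded_linear_add bounded_linear_scaleR_right bounded_linear_ident
        bounded_linear_compose[OF bounded_linear_scaleR_right bounded_linear_cJ])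

lemma norm_cscale: "norm (cscale a x) = cmod a * norm (x::'a::complex_hilbert)"
proof -
  have "(norm (cscale a x))^2 = inner (cscale a x) (cscale a x)"
    by (simp add: power2_norm_eq_inner)
  also have "... = (Re a ^2 + Im a ^2) * inner x x"
    by (simp add: cscale_def inner_add_left inner_add_right cJ_inner
          algebra_simps power2_eq_square inner_commute[of x "cJ x"])
  also have "... = (Re a ^2 + Im a ^2) * (norm x)^2"
    by (simp add: power2_norm_eq_inner)
  also have "... = (cmod a * norm x)^2"
    by (simp add: cmod_def power_mult_distrib)
  finally show ?thesis
    by (metis norm_ge_zero norm_mult power2_eq_imp_eq zero_le_mult_iff norm_ge_zero)
qed

lemma Re_cinner[simp]: "Re (cinner x y) = inner x y"
  by (simp add: cinner_def)

lemma Im_cinner[simp]: "Im (cinner x y) = inner (cJ x) y"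
  by (simp add: cinner_def)

lemma cinner_add_right: "cinner x (y + z) = cinner x y + cinner x (z::'a::complex_hilbert)"
  by (simp add: complex_eq_iff inner_add_right)

lemma cinner_add_left: "cinner (x + y) z = cinner x z + cinner y (z::'a::complex_hilbert)"
  by (simp add: complex_eq_iff inner_add_left cJ_add)

lemma cinner_diff_right: "cinner x (y - z) = cinner x y - cinner x (z::'a::complex_hilbert)"
  by (simp add: complex_eq_iff inner_diff_right)

lemma cinner_diff_left: "cinner (x - y) z = cinner x z - cinner y (z::'a::complex_hilbert)"
  by (simp add: complex_eq_iff inner_diff_left cJ_diff)

lemma cinner_minus_right: "cinner x (- y) = - cinner x (y::'a::complex_hilbert)"
  by (simp add: complex_eq_iff)

lemma cinner_minus_left: "cinner (- x) y = - cinner x (y::'a::complex_hilbert)"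
  by (simp add: complex_eq_iff cJ_minus)

lemma cinner_zero_right[simp]: "cinner x 0 = 0"
  by (simp add: complex_eq_iff)

lemma cinner_zero_left[simp]: "cinner 0 x = 0"
  by (simp add: complex_eq_iff)

lemma cinner_cJ_right: "cinner x (cJ y) = \<i> * cinner x (y::'a::complex_hilbert)"
  by (simp add: complex_eq_iff cJ_inner inner_cJ_left[of x])

lemma cinner_cJ_left: "cinner (cJ x) y = - \<i> * cinner x (y::'a::complex_hilbert)"
  by (simp add: complex_eq_iff cJ_cJ)

lemma cinner_scaleR_right: "cinner x (r *\<^sub>R y) = of_real r * cinner x (y::'a::complex_hilbert)"
  by (simp add: complex_eq_iff)

lemma cinner_scaleR_left: "cinner (r *\<^sub>R x) y = of_real r * cinner x (y::'a::complex_hilbert)"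
  by (simp add: complex_eq_iff cJ_scaleR)

lemma cinner_cscale_right: "cinner x (cscale a y) = a * cinner x (y::'a::complex_hilbert)"
  by (simp add: cscale_def cinner_add_right cinner_scaleR_right cinner_cJ_right complex_eq_iff)

lemma cinner_cscale_left: "cinner (cscale a x) y = cnj a * cinner x (y::'a::complex_hilbert)"
  by (simp add: cscale_def cinner_add_left cinner_scaleR_left cinner_cJ_left complex_eq_iff)

lemma cinner_commute: "cinner y x = cnj (cinner x (y::'a::complex_hilbert))"
  by (simp add: complex_eq_iff inner_commute[of x "cJ y"] inner_cJ_left inner_commute[of x y])

lemma cinner_self: "cinner x x = of_real ((norm (x::'a::complex_hilbert))^2)"
  by (simp add: complex_eq_iff power2_norm_eq_inner)

lemma cinner_sum_right: "cinner x (sum f A) = (\<Sum>i\<in>A. cinner x (f i :: 'a::complex_hilbert))"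
  by (induction A rule: infinite_finite_induct) (auto simp: cinner_add_right)

lemma cinner_sum_left: "cinner (sum f A) y = (\<Sum>i\<in>A. cinner (f i) (y :: 'a::complex_hilbert))"
  by (induction A rule: infinite_finite_induct) (auto simp: cinner_add_left)

lemma norm_cinner: "cmod (cinner x y) \<le> norm x * norm (y::'a::complex_hilbert)"
proof (cases "cinner x y = 0")
  case True then show ?thesis by simp
next
  case False
  define c where "c = cinner x y"
  define u where "u = sgn c"
  have "cinner (cscale u x) y = cnj u * c" by (simp add: cinner_cscale_left c_def)
  also have "cnj u * c = of_real (cmod c)"
    using False unfolding u_def c_def
    by (simp add: sgn_div_norm complex_eq_iff complex_norm_square[symmetric] power2_eq_square
          cmod_def field_simps)
  finally have "cmod c = inner (cscale u x) y"
    by (metis Re_cinner Re_complex_of_real)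
  also have "... \<le> norm (cscale u x) * norm y" by (rule Cauchy_Schwarz_ineq2[THEN order_trans[OF abs_ge_self]])
  also have "norm (cscale u x) = norm x" using False by (simp add: norm_cscale u_def c_def norm_sgn)
  finally show ?thesis by (simp add: c_def)
qed

lemma cinner_ext: "(\<And>x. cinner x y = cinner x z) \<Longrightarrow> y = (z::'a::complex_hilbert)"
  by (metis cinner_diff_right cinner_self diff_self eq_iff_diff_eq_0 of_real_eq_0_iff
        norm_eq_zero zero_less_power2 less_irrefl power_eq_0_iff zero_neq_numeral)

lemma bopI: "bounded_linear T \<Longrightarrow> (\<And>x. T (cJ x) = cJ (T x)) \<Longrightarrow> bop T"
  by (simp add: bop_def)

lemma bop_bl: "bop T \<Longrightarrow> bounded_linear T"
  by (simp add: bop_def)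

lemma bop_cJ: "bop T \<Longrightarrow> T (cJ x) = cJ (T x)"
  by (simp add: bop_def)

lemma BH_iff: "X \<in> BH \<longleftrightarrow> bop X"
  by (simp add: BH_def)

lemma bop_add_arg: "bop T \<Longrightarrow> T (x + y) = T x + T y"
  using bop_bl bounded_linear.linear linear_add by blast
lemma bop_diff_arg: "bop T \<Longrightarrow> T (x - y) = T x - T y"
  using bop_bl bounded_linear.linear linear_diff by blast
lemma bop_minus_arg: "bop T \<Longrightarrow> T (- x) = - T x"
  using bop_bl bounded_linear.linear linear_neg by blast
lemma bop_scaleR_arg: "bop T \<Longrightarrow> T (r *\<^sub>R x) = r *\<^sub>R T x"
  using bop_bl bounded_linear.linear linear_scale by blast
lemma bop_zero_arg: "bop T \<Longrightarrow> T 0 = 0"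
  using bop_bl bounded_linear.linear linear_0 by blast
lemma bop_sum_arg: "bop T \<Longrightarrow> T (sum f A) = (\<Sum>i\<in>A. T (f i))"
  using bop_bl bounded_linear.linear linear_sum by blast

lemma bop_cscale_arg: "bop T \<Longrightarrow> T (cscale a x) = cscale a (T x)"
  by (simp add: cscale_def bop_add_arg bop_scaleR_arg bop_cJ)

lemma bop_bound: "bop T \<Longrightarrow> \<exists>K>0. \<forall>x. norm (T x) \<le> norm x * K"
  using bop_bl bounded_linear.pos_bounded by blast

lemma bop_ident: "bop (\<lambda>x. x)"
  by (rule bopI) (auto intro: bounded_linear_ident)

lemma bop_id: "bop id"
  using bop_ident by (simp add: id_def)

lemma op_id_BH: "op_id \<in> BH"
  by (simp add: BH_iff op_id_def bop_ident)

lemma bop_compose: "bop S \<Longrightarrow> bop T \<Longrightarrow> bop (\<lambda>x. S (T x))"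
  by (rule bopI) (auto simp: bop_cJ intro: bounded_linear_compose[OF bop_bl bop_bl])

lemma bop_o: "bop S \<Longrightarrow> bop T \<Longrightarrow> bop (S \<circ> T)"
  using bop_compose by (simp add: comp_def)

lemma bop_plus: "bop S \<Longrightarrow> bop T \<Longrightarrow> bop (\<lambda>x. S x + T x)"
  by (rule bopI) (auto simp: bop_cJ cJ_add intro: bounded_linear_add[OF bop_bl bop_bl])

lemma bop_minus: "bop S \<Longrightarrow> bop T \<Longrightarrow> bop (\<lambda>x. S x - T x)"
  by (rule bopI) (auto simp: bop_cJ cJ_diff intro: bounded_linear_sub[OF bop_bl bop_bl])

lemma bop_uminus: "bop T \<Longrightarrow> bop (\<lambda>x. - T x)"
  by (rule bopI) (auto simp: bop_cJ cJ_minus intro: bounded_linear_minus[OF bop_bl])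

lemma bop_zero: "bop (\<lambda>x. 0)"
  by (rule bopI) (auto intro: bounded_linear_zero)

lemma bop_scaleR: "bop T \<Longrightarrow> bop (\<lambda>x. r *\<^sub>R T x)"
  by (rule bopI) (auto simp: bop_cJ cJ_scaleR intro: bounded_linear_compose[OF bounded_linear_scaleR_right bop_bl])

lemma bop_cscale: "bop T \<Longrightarrow> bop (\<lambda>x. cscale a (T x))"
  by (rule bopI) (auto simp: bop_cJ cJ_cscale
      intro: bounded_linear_compose[OF bounded_linear_cscale bop_bl])

lemma bop_op_scal: "bop (op_scal r)"
  unfolding op_scal_def using bop_scaleR[OF bop_ident] .

lemma bop_sum: "(\<And>i. i \<in> A \<Longrightarrow> bop (T i)) \<Longrightarrow> bop (\<lambda>x. \<Sum>i\<in>A. T i x)"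
proof (induction A rule: infinite_finite_induct)
  case (infinite A) then show ?case by (simp add: bop_zero)
next
  case empty then show ?case by (simp add: bop_zero)
next
  case (insert a A) then show ?case by (simp add: bop_plus)
qed

lemma lm_BH: "linear_map \<phi> \<Longrightarrow> X \<in> BH \<Longrightarrow> \<phi> X \<in> BH"
  by (simp add: linear_map_def)

lemma lm_bop: "linear_map \<phi> \<Longrightarrow> bop X \<Longrightarrow> bop (\<phi> X)"
  by (simp add: linear_map_def BH_iff)

lemma lm_comb: "linear_map \<phi> \<Longrightarrow> bop X \<Longrightarrow> bop Y \<Longrightarrow>
   \<phi> (\<lambda>x. cscale c (X x) + Y x) = (\<lambda>x. cscale c (\<phi> X x) + \<phi> Y x)"
  by (simp add: linear_map_def BH_iff)

lemma lm_zero: assumes "linear_map \<phi>" shows "\<phi> (\<lambda>x. 0) = (\<lambda>x. 0)"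
proof -
  have "\<phi> (\<lambda>x. cscale (-1) 0 + 0) = (\<lambda>x. cscale (-1) (\<phi> (\<lambda>x. 0) x) + \<phi> (\<lambda>x. 0) x)"
    using lm_comb[OF assms bop_zero bop_zero] by simp
  then show ?thesis by (simp add: cscale_minus_one)
qed

lemma lm_add: "linear_map \<phi> \<Longrightarrow> bop X \<Longrightarrow> bop Y \<Longrightarrow>
   \<phi> (\<lambda>x. X x + Y x) = (\<lambda>x. \<phi> X x + \<phi> Y x)"
  using lm_comb[of \<phi> X Y 1] by simp

lemma lm_cscale: assumes "linear_map \<phi>" "bop X"
  shows "\<phi> (\<lambda>x. cscale c (X x)) = (\<lambda>x. cscale c (\<phi> X x))"
  using lm_comb[OF assms bop_zero, of c] lm_zero[OF assms(1)] by simp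

lemma lm_scaleR: assumes "linear_map \<phi>" "bop X"
  shows "\<phi> (\<lambda>x. r *\<^sub>R X x) = (\<lambda>x. r *\<^sub>R \<phi> X x)"
  using lm_cscale[OF assms, of "of_real r"] by simp

lemma lm_uminus: assumes "linear_map \<phi>" "bop X"
  shows "\<phi> (\<lambda>x. - X x) = (\<lambda>x. - \<phi> X x)"
  using lm_scaleR[OF assms, of "-1"] by simp

lemma lm_diff: assumes "linear_map \<phi>" "bop X" "bop Y"
  shows "\<phi> (\<lambda>x. X x - Y x) = (\<lambda>x. \<phi> X x - \<phi> Y x)"
  using lm_comb[OF assms(1) assms(2) bop_uminus[OF assms(3)], of 1] lm_uminus[OF assms(1,3)]
  by simp

lemma lm_sum: assumes "linear_map \<phi>" "\<And>i. i \<in> A \<Longrightarrow> bop (X i)"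
  shows "\<phi> (\<lambda>x. \<Sum>i\<in>A. X i x) = (\<lambda>x. \<Sum>i\<in>A. \<phi> (X i) x)"
  using assms(2)
proof (induction A rule: infinite_finite_induct)
  case (infinite A) then show ?case by (simp add: lm_zero[OF assms(1)])
next
  case empty then show ?case by (simp add: lm_zero[OF assms(1)])
next
  case (insert a A)
  have "\<phi> (\<lambda>x. \<Sum>i\<in>insert a A. X i x) = \<phi> (\<lambda>x. X a x + (\<Sum>i\<in>A. X i x))"
    using insert by simp
  also have "... = (\<lambda>x. \<phi> (X a) x + \<phi> (\<lambda>x. \<Sum>i\<in>A. X i x) x)"
    using insert by (intro lm_add[OF assms(1)] bop_sum) auto
  finally show ?case using insert by simp
qed

lemma lm_pow_bop: "linear_map \<phi> \<Longrightarrow> bop X \<Longrightarrow> bop ((\<phi> ^^ n) X)"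
  by (induction n) (auto simp: lm_bop)

lemma op_le_iff: "op_le X Y \<longleftrightarrow>
   (\<forall>x. inner x (X x) \<le> inner x (Y x) \<and> inner (cJ x) (X x) = inner (cJ x) (Y x))"
  by (simp add: op_le_def less_eq_complex_def)

lemma positive_op_iff: "positive_op X \<longleftrightarrow> bop X \<and> (\<forall>x. 0 \<le> inner x (X x) \<and> inner (cJ x) (X x) = 0)"
  by (simp add: positive_op_def op_le_iff)

lemma op_le_refl: "op_le X X"
  by (simp add: op_le_iff)

lemma op_le_trans: "op_le X Y \<Longrightarrow> op_le Y Z \<Longrightarrow> op_le X Z"
  by (auto simp: op_le_iff intro: order_trans)

lemma op_le_pos: assumes "bop X" "bop Y"
  shows "op_le X Y \<longleftrightarrow> positive_op (\<lambda>x. Y x - X x)"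
  using assms by (auto simp: op_le_iff positive_op_iff bop_minus inner_diff_right)

lemma inner_op_scal[simp]: "inner x (op_scal a x) = a * (norm x)^2"
  by (simp add: op_scal_def power2_norm_eq_inner)

lemma inner_cJ_op_scal[simp]: "inner (cJ x) (op_scal a x) = 0"
  by (simp add: op_scal_def)

lemma op_le_scal_left: "op_le (op_scal a) X \<longleftrightarrow> (\<forall>x. a * (norm x)^2 \<le> inner x (X x) \<and> inner (cJ x) (X x) = 0)"
  by (auto simp: op_le_iff)

lemma op_le_scal_right: "op_le X (op_scal a) \<longleftrightarrow> (\<forall>x. inner x (X x) \<le> a * (norm x)^2 \<and> inner (cJ x) (X x) = 0)"
  by (auto simp: op_le_iff)

lemma pm_pos: "positive_map \<phi> \<Longrightarrow> positive_op X \<Longrightarrow> positive_op (\<phi> X)"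
  by (simp add: positive_map_def BH_iff positive_op_def)

lemma pm_mono: assumes "linear_map \<phi>" "positive_map \<phi>" "bop X" "bop Y" "op_le X Y"
  shows "op_le (\<phi> X) (\<phi> Y)"
proof -
  have "positive_op (\<lambda>x. Y x - X x)" using assms op_le_pos by blast
  then have "positive_op (\<phi> (\<lambda>x. Y x - X x))" using assms(2) pm_pos by blast
  then show ?thesis using lm_diff[OF assms(1) assms(4) assms(3)]
    by (simp add: op_le_pos lm_bop assms)
qed

lemma pm_pow_pos: "linear_map \<phi> \<Longrightarrow> positive_map \<phi> \<Longrightarrow> positive_op X \<Longrightarrow> positive_op ((\<phi> ^^ n) X)"
  by (induction n) (auto simp: pm_pos)

lemma pm_pow_mono: "linear_map \<phi> \<Longrightarrow> positive_map \<phi> \<Longrightarrow> bop X \<Longrightarrow> bop Y \<Longrightarrow> op_le X Y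
   \<Longrightarrow> op_le ((\<phi> ^^ n) X) ((\<phi> ^^ n) Y)"
proof (induction n)
  case (Suc n)
  then show ?case using pm_mono[of \<phi> "(\<phi>^^n) X" "(\<phi>^^n) Y"] lm_pow_bop[of \<phi> X n] lm_pow_bop[of \<phi> Y n] by simp
qed simp

section \<open>Cauchy-Schwarz for positive operators\<close>

lemma cmod_cinner_self[simp]: "cmod (cinner x x) = (norm (x::'a::complex_hilbert))^2"
  by (simp only: cinner_self norm_of_real) simp

lemma pos_herm: assumes "positive_op X"
  shows "cinner y (X x) = cnj (cinner x (X y))"
proof -
  have b: "bop X" and im: "\<And>u. inner (cJ u) (X u) = 0" using assms by (auto simp: positive_op_iff)
  have h1: "Im (cinner (x + y) (X (x + y))) = 0" using im by simp
  have h2: "Im (cinner (x + cJ y) (X (x + cJ y))) = 0" using im by simp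
  have e1: "cinner (x + y) (X (x + y)) = cinner x (X x) + cinner x (X y) + cinner y (X x) + cinner y (X y)"
    by (simp add: bop_add_arg[OF b] cinner_add_left cinner_add_right)
  have e2: "cinner (x + cJ y) (X (x + cJ y)) = cinner x (X x) + \<i> * cinner x (X y) - \<i> * cinner y (X x) + cinner y (X y)"
    by (simp add: bop_add_arg[OF b] bop_cJ[OF b] cinner_add_left cinner_add_right cinner_cJ_left cinner_cJ_right algebra_simps)
  have i1: "Im (cinner x (X x)) = 0" "Im (cinner y (X y)) = 0" using im by auto
  show ?thesis using h1 h2 i1 unfolding e1 e2 by (simp add: complex_eq_iff)
qed

lemma discriminant_le:
  fixes A B C :: real
  assumes "\<And>t. 0 \<le> A + 2 * B * t + C * t^2" "0 \<le> C"
  shows "B^2 \<le> A * C"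
proof (cases "C = 0")
  case True
  show ?thesis
  proof (rule ccontr)
    assume "\<not> ?thesis"
    then have "B \<noteq> 0" using True by auto
    then have "0 \<le> A + 2 * B * (- (A + 1) / (2 * B))" using assms(1)[of "- (A + 1) / (2 * B)"] True by simp
    then show False using \<open>B \<noteq> 0\<close> by (simp add: field_simps)
  qed
next
  case False
  then have C: "C > 0" using assms(2) by simp
  have "0 \<le> A + 2 * B * (- B / C) + C * (- B / C)^2" by (rule assms(1))
  also have "... = A - B^2 / C" using C by (simp add: field_simps power2_eq_square)
  finally show ?thesis using C by (simp add: field_simps)
qed

lemma pos_CS: assumes "positive_op X"
  shows "(cmod (cinner x (X y)))^2 \<le> inner x (X x) * inner y (X y)"
proof (cases "cinner x (X y) = 0")
  case True
  then show ?thesis using assms by (simp add: positive_op_iff)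
next
  case False
  have b: "bop X" using assms by (simp add: positive_op_iff)
  define c where "c = cinner x (X y)"
  define u where "u = sgn c"
  define x' where "x' = cscale u x"
  have u1: "cnj u * u = 1" using False by (simp add: u_def c_def complex_norm_square[symmetric] norm_sgn
        mult.commute[of "cnj _"] flip: complex_mult_cnj)
  have "cinner x' (X y) = cnj u * c" by (simp add: x'_def cinner_cscale_left c_def)
  also have "cnj u * c = of_real (cmod c)"
    using False unfolding u_def c_def
    by (simp add: sgn_div_norm complex_eq_iff complex_norm_square[symmetric] power2_eq_square
          cmod_def field_simps)
  finally have cx: "cinner x' (X y) = of_real (cmod c)" .
  have cx2: "cinner y (X x') = of_real (cmod c)" using pos_herm[OF assms, of y x'] cx by simp
  have xx: "inner x' (X x') = inner x (X x)"
  proof -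
    have "cinner x' (X x') = (cnj u * u) * cinner x (X x)"
      by (simp add: x'_def bop_cscale_arg[OF b] cinner_cscale_left cinner_cscale_right)
    then show ?thesis using u1 by (metis Re_cinner mult_1)
  qed
  have "\<And>t. 0 \<le> inner x (X x) + 2 * cmod c * t + inner y (X y) * t^2"
  proof -
    fix t :: real
    have "0 \<le> inner (x' + t *\<^sub>R y) (X (x' + t *\<^sub>R y))" using assms by (simp add: positive_op_iff)
    also have "... = inner x' (X x') + t * inner x' (X y) + t * inner y (X x') + t^2 * inner y (X y)"
      by (simp add: bop_add_arg[OF b] bop_scaleR_arg[OF b] inner_add_left inner_add_right
            algebra_simps power2_eq_square)
    also have "inner x' (X y) = cmod c" using arg_cong[OF cx, of Re] by simp
    also have "inner y (X x') = cmod c" using arg_cong[OF cx2, of Re] by simp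
    finally show "0 \<le> inner x (X x) + 2 * cmod c * t + inner y (X y) * t^2" using xx by (simp add: algebra_simps)
  qed
  from discriminant_le[OF this] have "(cmod c)^2 \<le> inner x (X x) * inner y (X y)"
    using assms by (simp add: positive_op_iff)
  then show ?thesis by (simp add: c_def)
qed

lemma pos_norm_bound: assumes "positive_op X" "op_le X (op_scal r)" "0 \<le> r"
  shows "norm (X y) \<le> r * norm y"
proof -
  define z where "z = X y"
  have "(cmod (cinner z (X y)))^2 \<le> inner z (X z) * inner y (X y)" by (rule pos_CS[OF assms(1)])
  also have "... \<le> (r * (norm z)^2) * (r * (norm y)^2)"
    using assms by (intro mult_mono) (auto simp: op_le_scal_right positive_op_iff)
  also have "cmod (cinner z (X y)) = (norm z)^2" by (simp add: z_def)
  finally have "((norm z)^2)^2 \<le> (r * norm y)^2 * (norm z)^2"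
    by (simp add: power2_eq_square algebra_simps)
  then have "(norm z)^2 \<le> (r * norm y)^2"
    by (cases "norm z = 0") (auto simp: power2_eq_square)
  then show ?thesis using assms(3) by (simp add: z_def power2_le_iff_abs_le)
qed

lemma pos_upper: assumes "positive_op Q" shows "\<exists>d>0. op_le Q (op_scal d)"
proof -
  obtain K where K: "K > 0" "\<And>x. norm (Q x) \<le> norm x * K" using bop_bound assms positive_op_iff by blast
  have "inner x (Q x) \<le> K * (norm x)^2" for x
  proof -
    have "inner x (Q x) \<le> norm x * norm (Q x)" by (rule norm_cauchy_schwarz)
    also have "... \<le> norm x * (norm x * K)" by (intro mult_left_mono K(2)) auto
    finally show ?thesis by (simp add: power2_eq_square algebra_simps)
  qed
  then show ?thesis using K assms by (auto simp: op_le_scal_right positive_op_iff)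
qed

lemma pos_inv_lower: assumes "positive_op Q" "invertible_op Q" shows "\<exists>c>0. op_le (op_scal c) Q"
proof -
  obtain S where S: "bop S" "S \<circ> Q = id" "Q \<circ> S = id" using assms(2) by (auto simp: invertible_op_def)
  obtain K where K: "K > 0" "\<And>x. norm (S x) \<le> norm x * K" using bop_bound S by blast
  have QS: "Q (S x) = x" for x using S(3) by (metis comp_apply id_apply)
  have "(1/K) * (norm x)^2 \<le> inner x (Q x)" for x
  proof (cases "x = 0")
    case True then show ?thesis by simp
  next
    case False
    have "(cmod (cinner x (Q (S x))))^2 \<le> inner x (Q x) * inner (S x) (Q (S x))" by (rule pos_CS[OF assms(1)])
    also have "inner (S x) (Q (S x)) \<le> K * (norm x)^2"
    proof -
      have "inner (S x) (Q (S x)) \<le> norm (S x) * norm x" using QS norm_cauchy_schwarz by metis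
      also have "... \<le> (norm x * K) * norm x" by (intro mult_right_mono K(2)) auto
      finally show ?thesis by (simp add: power2_eq_square algebra_simps)
    qed
    then have "inner x (Q x) * inner (S x) (Q (S x)) \<le> inner x (Q x) * (K * (norm x)^2)"
      using assms(1) by (intro mult_left_mono) (auto simp: positive_op_iff)
    finally have "((norm x)^2)^2 \<le> inner x (Q x) * (K * (norm x)^2)"
      by (simp add: QS)
    then have "(norm x)^2 \<le> inner x (Q x) * K" using False
      by (simp add: power2_eq_square algebra_simps)
    then show ?thesis using K(1) by (simp add: field_simps)
  qed
  then show ?thesis using K(1) assms(1) by (intro exI[of _ "1/K"]) (auto simp: op_le_scal_left positive_op_iff)
qed

section \<open>Riesz representation\<close>

lemma riesz_real:
  fixes f :: "'a::{real_inner,complete_space} \<Rightarrow> real"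
  assumes bl: "bounded_linear f"
  shows "\<exists>z. \<forall>x. f x = inner z x"
proof (cases "\<forall>x. f x = 0")
  case True then show ?thesis by (intro exI[of _ 0]) simp
next
  case False
  interpret f: bounded_linear f by fact
  obtain K where K: "K > 0" "\<And>x. norm (f x) \<le> norm x * K" using f.pos_bounded by blast
  define B where "B = f ` {x. norm x \<le> 1}"
  define N where "N = Sup B"
  have bdd: "bdd_above B" unfolding B_def bdd_above_def
  proof (intro exI[of _ K] ballI)
    fix y assume "y \<in> f ` {x. norm x \<le> 1}"
    then obtain x where x: "norm x \<le> 1" "y = f x" by auto
    have "y \<le> norm (f x)" using x by simp
    also have "... \<le> norm x * K" by (rule K(2))
    also have "... \<le> K" using x K by (simp add: mult_left_le_one_le)
    finally show "y \<le> K" .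
  qed
  have "(0::'a) \<in> {x. norm x \<le> 1}" by simp
  then have ne: "B \<noteq> {}" unfolding B_def by blast
  have upper: "f x \<le> N" if "norm x \<le> 1" for x
    unfolding N_def using bdd that by (intro cSup_upper) (auto simp: B_def)
  have fle: "f x \<le> N * norm x" for x
  proof (cases "x = 0")
    case True then show ?thesis by (simp add: f.zero)
  next
    case False
    have "f (x /\<^sub>R norm x) \<le> N" by (rule upper) (simp add: False)
    then show ?thesis using False by (simp add: f.scaleR field_simps)
  qed
  obtain x0 where x0: "f x0 \<noteq> 0" using False by blast
  have Npos: "N > 0"
  proof -
    have "f x0 \<le> N * norm x0" "- f x0 \<le> N * norm x0" using fle[of x0] fle[of "-x0"] by (auto simp: f.neg)
    then have "0 < N * norm x0" using x0 by linarith
    then show ?thesis by (simp add: zero_less_mult_iff)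
  qed
  have "\<forall>n. \<exists>x. norm x \<le> 1 \<and> N - 1 / real (Suc n) < f x"
  proof
    fix n
    have "N - 1/real (Suc n) < Sup B" unfolding N_def[symmetric] by simp
    then obtain b where "b \<in> B" "N - 1/real(Suc n) < b" using less_cSup_iff[OF ne bdd] by blast
    then show "\<exists>x. norm x \<le> 1 \<and> N - 1 / real (Suc n) < f x" unfolding B_def by auto
  qed
  then obtain xs where xs: "\<And>n. norm (xs n) \<le> 1" "\<And>n. N - 1 / real (Suc n) < f (xs n)" by metis
  have key: "(norm (xs m - xs n))^2 \<le> 4 * ((1/real (Suc m) + 1/real (Suc n)) / N)" for m n
  proof -
    define \<eta> where "\<eta> = (1/real (Suc m) + 1/real (Suc n)) / N"
    have par: "(norm (xs m - xs n))^2 = 2 * (norm (xs m))^2 + 2 * (norm (xs n))^2 - (norm (xs m + xs n))^2"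
      by (simp add: power2_norm_eq_inner inner_diff_left inner_diff_right inner_add_left
          inner_add_right inner_commute)
    have "f (xs m + xs n) \<le> N * norm (xs m + xs n)" by (rule fle)
    moreover have "f (xs m + xs n) > 2 * N - (1/real(Suc m) + 1/real(Suc n))"
      using xs(2)[of m] xs(2)[of n] by (simp add: f.add)
    moreover have "N * \<eta> = 1/real(Suc m) + 1/real(Suc n)" using Npos by (simp add: \<eta>_def)
    ultimately have "N * (2 - \<eta>) < N * norm (xs m + xs n)" by (simp add: algebra_simps)
    then have lb: "2 - \<eta> < norm (xs m + xs n)" using Npos by simp
    have n1: "(norm (xs m))^2 \<le> 1" "(norm (xs n))^2 \<le> 1" using xs(1) by (auto intro: power_le_one)
    show ?thesis
    proof (cases "\<eta> \<le> 2")
      case True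
      have "(2 - \<eta>)^2 \<le> (norm (xs m + xs n))^2" using lb True by (intro power_mono) auto
      then have "(norm (xs m - xs n))^2 \<le> 4 - (2 - \<eta>)^2" using par n1 by linarith
      also have "... \<le> 4 * \<eta>" by (simp add: power2_eq_square algebra_simps)
      finally show ?thesis by (simp add: \<eta>_def)
    next
      case False
      have "norm (xs m - xs n) \<le> norm (xs m) + norm (xs n)" by (rule norm_triangle_ineq4)
      also have "... \<le> 2" using xs(1)[of m] xs(1)[of n] by simp
      finally have "(norm (xs m - xs n))^2 \<le> 2^2" by (intro power_mono) auto
      then have "(norm (xs m - xs n))^2 \<le> 4 * \<eta>" using False by simp
      then show ?thesis by (simp add: \<eta>_def)
    qed
  qed
  have "Cauchy xs"
  proof (rule metric_CauchyI)
    fix e :: real assume e: "e > 0"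
    obtain M :: nat where M: "8 / (N * e^2) < real M" using reals_Archimedean2 by blast
    show "\<exists>M. \<forall>m\<ge>M. \<forall>n\<ge>M. dist (xs m) (xs n) < e"
    proof (intro exI allI impI)
      fix m n assume mn: "M \<le> m" "M \<le> n"
      have a: "1/real (Suc m) \<le> 1/real (Suc M)" "1/real (Suc n) \<le> 1/real (Suc M)"
        using mn by (auto simp: field_simps)
      have "(dist (xs m) (xs n))^2 \<le> 4 * ((1/real (Suc m) + 1/real (Suc n)) / N)"
        using key by (simp add: dist_norm)
      also have "... \<le> 4 * ((1/real (Suc M) + 1/real (Suc M)) / N)"
        using a Npos by (intro mult_left_mono divide_right_mono) auto
      also have "... = 8 / (N * real (Suc M))" by (simp add: field_simps)
      also have "... < e^2"
      proof -
        have p1: "N * e^2 > 0" using Npos e by simp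
        have p2: "N * real (Suc M) > 0" using Npos by simp
        have "8 / (N * e^2) < real (Suc M)" using M by simp
        then have "8 < real (Suc M) * (N * e^2)" by (simp only: pos_divide_less_eq[OF p1])
        then have "8 < e^2 * (N * real (Suc M))" by (simp add: algebra_simps)
        then show ?thesis by (simp only: pos_divide_less_eq[OF p2])
      qed
      finally show "dist (xs m) (xs n) < e" using e by (simp add: power2_less_imp_less)
    qed
  qed
  then obtain z where z: "xs \<longlonglongrightarrow> z" using Cauchy_convergent_iff convergent_def by blast
  have nz: "norm z \<le> 1" using tendsto_norm[OF z] xs(1) by (intro LIMSEQ_le_const2) auto
  have fz: "f z = N"
  proof -
    have "(\<lambda>n. f (xs n)) \<longlonglongrightarrow> f z" using f.tendsto[OF z] .
    moreover have "(\<lambda>n. f (xs n)) \<longlonglongrightarrow> N"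
    proof (rule real_tendsto_sandwich[of "\<lambda>n. N - 1/real(Suc n)" _ _ "\<lambda>n. N"])
      show "\<forall>\<^sub>F n in sequentially. N - 1 / real (Suc n) \<le> f (xs n)" using xs(2) less_imp_le by (intro always_eventually allI) blast
      show "\<forall>\<^sub>F n in sequentially. f (xs n) \<le> N" using upper xs(1) by auto
      have "(\<lambda>n. N - 1/real(Suc n)) \<longlonglongrightarrow> N - 0"
        using LIMSEQ_inverse_real_of_nat by (intro tendsto_diff tendsto_const) (simp add: inverse_eq_divide)
      then show "(\<lambda>n. N - 1 / real (Suc n)) \<longlonglongrightarrow> N" by simp
    qed simp
    ultimately show ?thesis using LIMSEQ_unique by blast
  qed
  have z1: "norm z = 1" using fle[of z] fz Npos nz by simp
  have zz: "inner z z = 1" using z1 by (simp add: power2_norm_eq_inner[symmetric])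
  have orth: "f h = 0" if hz: "inner z h = 0" for h
  proof (rule ccontr)
    assume fh: "f h \<noteq> 0"
    have main: "t * f h \<le> N * t^2 * (norm h)^2" for t
    proof -
      have n2: "(norm (z + t *\<^sub>R h))^2 = 1 + t^2 * (norm h)^2"
        using hz zz by (simp only: power2_norm_eq_inner)
          (simp add: inner_add_left inner_add_right inner_commute[of h z] power2_eq_square algebra_simps)
      have "1 \<le> (norm (z + t *\<^sub>R h))^2" using n2 by simp
      then have g1: "1 \<le> norm (z + t *\<^sub>R h)" using power2_le_imp_le[of 1 "norm (z + t *\<^sub>R h)"] by simp
      then have g2: "norm (z + t *\<^sub>R h) \<le> (norm (z + t *\<^sub>R h))^2"
        using mult_left_mono[OF g1, of "norm (z + t *\<^sub>R h)"] by (simp add: power2_eq_square)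
      have "f (z + t *\<^sub>R h) \<le> N * norm (z + t *\<^sub>R h)" by (rule fle)
      also have "... \<le> N * (norm (z + t *\<^sub>R h))^2"
        using Npos g2 by (intro mult_left_mono) auto
      finally have "N + t * f h \<le> N * (1 + t^2 * (norm h)^2)" using n2 fz by (simp add: f.add f.scaleR)
      then show ?thesis by (simp add: algebra_simps)
    qed
    define s where "s = 1 / (2 * N * (norm h)^2 + 1)"
    have dpos: "0 < 2 * N * (norm h)^2 + 1" using Npos by (intro add_nonneg_pos) auto
    have spos: "s > 0" using dpos by (simp add: s_def)
    have "s * f h * f h \<le> N * (s * f h)^2 * (norm h)^2" using main[of "s * f h"] by simp
    then have le: "s * (f h)^2 \<le> (N * s * (norm h)^2) * (s * (f h)^2)"
      by (simp add: power2_eq_square algebra_simps)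
    have c1: "N * s * (norm h)^2 < 1" using dpos by (simp add: s_def field_simps)
    have a0: "s * (f h)^2 > 0" using spos fh by simp
    have "(N * s * (norm h)^2) * (s * (f h)^2) < 1 * (s * (f h)^2)"
      by (rule mult_strict_right_mono[OF c1 a0])
    then show False using le by simp
  qed
  show ?thesis
  proof (intro exI allI)
    fix x
    define h where "h = x - inner z x *\<^sub>R z"
    have "inner z h = 0" using zz by (simp add: h_def inner_diff_right)
    then have "f h = 0" by (rule orth)
    moreover have "x = h + inner z x *\<^sub>R z" by (simp add: h_def)
    ultimately have "f x = inner z x * f z" by (metis f.add f.scaleR add_0 real_scaleR_def mult.commute)
    then show "f x = inner (N *\<^sub>R z) x" using fz by simp
  qed
qed

lemma sesq_rep:
  fixes B :: "'a::complex_hilbert \<Rightarrow> 'a \<Rightarrow> complex"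
  assumes addL: "\<And>x x' y. B (x + x') y = B x y + B x' y"
      and scL: "\<And>c x y. B (cscale c x) y = cnj c * B x y"
      and addR: "\<And>x y y'. B x (y + y') = B x y + B x y'"
      and scR: "\<And>c x y. B x (cscale c y) = c * B x y"
      and bnd: "\<And>x y. cmod (B x y) \<le> M * norm x * norm y"
      and M: "0 \<le> M"
  shows "\<exists>Q. bop Q \<and> (\<forall>x y. B x y = cinner x (Q y))"
proof -
  have ex: "\<exists>z. \<forall>x. B x y = cinner x z" for y
  proof -
    have "bounded_linear (\<lambda>x. Re (B x y))"
    proof (rule bounded_linear_intro[where K="M * norm y"])
      show "Re (B (x + x') y) = Re (B x y) + Re (B x' y)" for x x' by (simp add: addL)
      show "Re (B (r *\<^sub>R x) y) = r *\<^sub>R Re (B x y)" for r x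
        using scL[of "of_real r" x y] by simp
      show "norm (Re (B x y)) \<le> norm x * (M * norm y)" for x
        using abs_Re_le_cmod[of "B x y"] bnd[of x y] by (simp add: algebra_simps)
    qed
    then obtain z where z: "\<And>x. Re (B x y) = inner z x" using riesz_real by blast
    have "B x y = cinner x z" for x
    proof -
      have "B (cJ x) y = - \<i> * B x y" using scL[of \<i> x y] by (simp add: cscale_ii)
      then have "Im (B x y) = Re (B (cJ x) y)" by simp
      then show ?thesis using z[of x] z[of "cJ x"] by (simp add: complex_eq_iff inner_commute)
    qed
    then show ?thesis by blast
  qed
  define Q where "Q y = (SOME z. \<forall>x. B x y = cinner x z)" for y
  have Q: "B x y = cinner x (Q y)" for x y
    unfolding Q_def using someI_ex[OF ex[of y]] by blast
  have Qadd: "Q (y + y') = Q y + Q y'" for y y'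
    by (rule cinner_ext) (simp add: Q[symmetric] addR cinner_add_right)
  have Qsc: "Q (cscale c y) = cscale c (Q y)" for c y
    by (rule cinner_ext) (simp add: Q[symmetric] scR cinner_cscale_right)
  have Qbnd: "norm (Q y) \<le> norm y * M" for y
  proof (cases "Q y = 0")
    case True then show ?thesis using M by simp
  next
    case False
    have "(norm (Q y))^2 = cmod (B (Q y) y)" by (simp add: Q)
    also have "... \<le> M * norm (Q y) * norm y" by (rule bnd)
    finally have "norm (Q y) * norm (Q y) \<le> norm (Q y) * (norm y * M)" by (simp add: power2_eq_square algebra_simps)
    then show ?thesis using False by simp
  qed
  have "bop Q"
  proof (rule bopI)
    show "bounded_linear Q"
      by (rule bounded_linear_intro[where K=M]) (auto simp: Qadd Qbnd Qsc[of "of_real r" for r, simplified])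
    show "Q (cJ x) = cJ (Q x)" for x using Qsc[of \<i> x] by (simp add: cscale_ii)
  qed
  then show ?thesis using Q by blast
qed

section \<open>Adjoints\<close>

lemma adjoint_exists: assumes "bop T"
  shows "\<exists>S. bop S \<and> (\<forall>x y. cinner (T x) y = cinner x (S y))"
proof -
  obtain K where K: "K > 0" "\<And>x. norm (T x) \<le> norm x * K" using bop_bound assms by blast
  show ?thesis
  proof (rule sesq_rep[of "\<lambda>x y. cinner (T x) y" K])
    show "cinner (T (x + x')) y = cinner (T x) y + cinner (T x') y" for x x' y
      by (simp add: bop_add_arg[OF assms] cinner_add_left)
    show "cinner (T (cscale c x)) y = cnj c * cinner (T x) y" for c x y
      by (simp add: bop_cscale_arg[OF assms] cinner_cscale_left)
    show "cinner (T x) (y + y') = cinner (T x) y + cinner (T x) y'" for x y y'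
      by (simp add: cinner_add_right)
    show "cinner (T x) (cscale c y) = c * cinner (T x) y" for c x y
      by (simp add: cinner_cscale_right)
    show "cmod (cinner (T x) y) \<le> K * norm x * norm y" for x y
    proof -
      have "cmod (cinner (T x) y) \<le> norm (T x) * norm y" by (rule norm_cinner)
      also have "... \<le> (norm x * K) * norm y" by (intro mult_right_mono K(2)) auto
      finally show ?thesis by (simp add: algebra_simps)
    qed
  qed (use K in auto)
qed

lemma adjoint_bop: "bop T \<Longrightarrow> bop (adjoint T)"
  unfolding adjoint_def using someI_ex[OF adjoint_exists] by blast

lemma adjoint_prop: "bop T \<Longrightarrow> cinner (T x) y = cinner x (adjoint T y)"
  unfolding adjoint_def using someI_ex[OF adjoint_exists] by blast

lemma adjoint_prop2: "bop T \<Longrightarrow> cinner (adjoint T x) y = cinner x (T y)"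
  by (metis adjoint_prop cinner_commute complex_cnj_cnj)

lemma adjoint_unique: assumes "bop T" "bop S" "\<And>x y. cinner (T x) y = cinner x (S y)"
  shows "adjoint T = S"
proof
  fix y show "adjoint T y = S y"
    by (rule cinner_ext) (simp add: adjoint_prop[OF assms(1), symmetric] assms(3))
qed

lemma adjoint_id: "adjoint id = (id :: 'a::complex_hilbert \<Rightarrow> 'a)"
  by (rule adjoint_unique) (auto simp: bop_id)

lemma adjoint_comp: assumes "bop A" "bop B"
  shows "adjoint (A \<circ> B) = adjoint B \<circ> adjoint A"
  by (rule adjoint_unique) (auto simp: assms bop_o adjoint_bop adjoint_prop)

lemma adjoint_selfadj: assumes "bop A" "\<And>x y. cinner (A x) y = cinner x (A y)"
  shows "adjoint A = A"
  by (rule adjoint_unique) (auto simp: assms)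

lemma adjoint_bound: assumes "bop T" shows "\<exists>K>0. \<forall>x. norm (adjoint T x) \<le> norm x * K"
  using bop_bound adjoint_bop assms by blast

lemma op_le_scaleR: "op_le X Y \<Longrightarrow> 0 \<le> r \<Longrightarrow> op_le (\<lambda>x. r *\<^sub>R X x) (\<lambda>x. r *\<^sub>R Y x)"
  by (auto simp: op_le_iff mult_left_mono)

lemma scaleR_op_scal: "(\<lambda>x. r *\<^sub>R op_scal a x) = op_scal (r * a)"
  by (simp add: op_scal_def)

lemma op_id_scal: "op_id = op_scal 1"
  by (simp add: op_scal_def op_id_def)

lemma op_id_id: "op_id = id"
  by (simp add: op_id_def id_def)

lemma op_le_scal_mono: "a \<le> b \<Longrightarrow> op_le (op_scal a) (op_scal b)"
  by (auto simp: op_le_iff intro: mult_right_mono)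

lemma lm_pow_scaleR: assumes "linear_map \<phi>" "bop X"
  shows "(\<phi>^^n) (\<lambda>x. r *\<^sub>R X x) = (\<lambda>x. r *\<^sub>R (\<phi>^^n) X x)"
proof (induction n)
  case (Suc n)
  then show ?case using lm_scaleR[OF assms(1) lm_pow_bop[OF assms, of n]] by simp
qed simp

lemma funpow_fix: "f x = x \<Longrightarrow> (f ^^ n) x = x"
  by (induction n) auto

lemma transfer_bounds:
  assumes lm: "linear_map \<phi>" "positive_map \<phi>" and R: "bop R"
    and cR: "0 < cR" "0 < dR" "op_le (op_scal cR) R" "op_le R (op_scal dR)"
    and k: "op_le (op_scal c) ((\<phi>^^k) R)" "op_le ((\<phi>^^k) R) (op_scal d)"
  shows "op_le (op_scal (c / dR)) ((\<phi>^^k) op_id) \<and> op_le ((\<phi>^^k) op_id) (op_scal (d / cR))"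
proof
  have "op_le (\<lambda>x. (1/cR) *\<^sub>R op_scal cR x) (\<lambda>x. (1/cR) *\<^sub>R R x)"
    using op_le_scaleR[OF cR(3), of "1/cR"] cR by simp
  then have "op_le op_id (\<lambda>x. (1/cR) *\<^sub>R R x)" using cR by (simp add: scaleR_op_scal op_id_scal)
  then have "op_le ((\<phi>^^k) op_id) ((\<phi>^^k) (\<lambda>x. (1/cR) *\<^sub>R R x))"
    by (intro pm_pow_mono lm) (auto simp: R bop_scaleR op_id_id bop_id)
  also have "(\<phi>^^k) (\<lambda>x. (1/cR) *\<^sub>R R x) = (\<lambda>x. (1/cR) *\<^sub>R (\<phi>^^k) R x)"
    by (rule lm_pow_scaleR[OF lm(1) R])
  finally have a: "op_le ((\<phi>^^k) op_id) (\<lambda>x. (1/cR) *\<^sub>R (\<phi>^^k) R x)" .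
  have "op_le (\<lambda>x. (1/cR) *\<^sub>R (\<phi>^^k) R x) (\<lambda>x. (1/cR) *\<^sub>R op_scal d x)"
    using op_le_scaleR[OF k(2), of "1/cR"] cR by simp
  then show "op_le ((\<phi>^^k) op_id) (op_scal (d / cR))"
    using op_le_trans[OF a] by (simp add: scaleR_op_scal)
next
  have "op_le (\<lambda>x. (1/dR) *\<^sub>R R x) (\<lambda>x. (1/dR) *\<^sub>R op_scal dR x)"
    using op_le_scaleR[OF cR(4), of "1/dR"] cR by simp
  then have "op_le (\<lambda>x. (1/dR) *\<^sub>R R x) op_id" using cR by (simp add: scaleR_op_scal op_id_scal)
  then have "op_le ((\<phi>^^k) (\<lambda>x. (1/dR) *\<^sub>R R x)) ((\<phi>^^k) op_id)"
    by (intro pm_pow_mono lm) (auto simp: R bop_scaleR op_id_id bop_id)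
  also have "(\<phi>^^k) (\<lambda>x. (1/dR) *\<^sub>R R x) = (\<lambda>x. (1/dR) *\<^sub>R (\<phi>^^k) R x)"
    by (rule lm_pow_scaleR[OF lm(1) R])
  finally have a: "op_le (\<lambda>x. (1/dR) *\<^sub>R (\<phi>^^k) R x) ((\<phi>^^k) op_id)" .
  have "op_le (\<lambda>x. (1/dR) *\<^sub>R op_scal c x) (\<lambda>x. (1/dR) *\<^sub>R (\<phi>^^k) R x)"
    using op_le_scaleR[OF k(1), of "1/dR"] cR by simp
  then show "op_le (op_scal (c / dR)) ((\<phi>^^k) op_id)"
    using op_le_trans[OF _ a] by (simp add: scaleR_op_scal)
qed

lemma invertible_op_id: "invertible_op op_id"
  by (auto simp: invertible_op_def op_id_id bop_id intro!: exI[of _ id])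

lemma positive_op_id: "positive_op op_id"
  by (simp add: positive_op_iff op_id_def bop_ident)

lemma C5_C4:
  assumes lm: "linear_map \<phi>" "positive_map \<phi>"
    and c: "0 < c" "c \<le> d" and R: "invertible_op R" "positive_op R"
    and k: "\<forall>k\<ge>1. op_le (op_scal c) ((\<phi> ^^ k) R) \<and> op_le ((\<phi> ^^ k) R) (op_scal d)"
  shows "\<exists>c d. 0 < c \<and> c \<le> d \<and> (\<forall>k\<ge>1.
            op_le (op_scal c) ((\<phi> ^^ k) op_id) \<and> op_le ((\<phi> ^^ k) op_id) (op_scal d))"
proof -
  obtain cR where cR: "cR > 0" "op_le (op_scal cR) R" using pos_inv_lower R by blast
  obtain dR0 where dR0: "dR0 > 0" "op_le R (op_scal dR0)" using pos_upper R by blast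
  define dR where "dR = max dR0 cR"
  have dR: "dR > 0" "op_le R (op_scal dR)" "cR \<le> dR"
    using dR0 cR op_le_trans[OF dR0(2) op_le_scal_mono[of dR0 dR]] by (auto simp: dR_def)
  have bR: "bop R" using R by (simp add: positive_op_iff)
  have "c / dR \<le> d / dR" using c dR by (simp add: divide_right_mono)
  also have "d / dR \<le> d / cR" using c dR cR by (intro divide_left_mono) auto
  finally have le: "c / dR \<le> d / cR" .
  show ?thesis
    using transfer_bounds[OF lm bR cR(1) dR(1) cR(2) dR(2)] k le c dR
    by (intro exI[of _ "c / dR"] exI[of _ "d / cR"]) auto
qed

lemma C6_C5:
  assumes Q: "invertible_op Q" "positive_op Q" "\<phi> Q = Q"
  shows "\<exists>c d R. 0 < c \<and> c \<le> d \<and> invertible_op R \<and> positive_op R \<and> (\<forall>k\<ge>1.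
            op_le (op_scal c) ((\<phi> ^^ k) R) \<and> op_le ((\<phi> ^^ k) R) (op_scal d))"
proof -
  obtain c where c: "c > 0" "op_le (op_scal c) Q" using pos_inv_lower Q by blast
  obtain d0 where d0: "d0 > 0" "op_le Q (op_scal d0)" using pos_upper Q by blast
  have d: "op_le Q (op_scal (max d0 c))" using op_le_trans[OF d0(2) op_le_scal_mono] by simp
  show ?thesis using c d Q funpow_fix[of \<phi> Q]
    by (intro exI[of _ c] exI[of _ "max d0 c"] exI[of _ Q]) auto
qed

lemma cesaro_bounds:
  assumes "\<And>j. op_le (op_scal a) ((\<phi>^^j) P) \<and> op_le ((\<phi>^^j) P) (op_scal b)" "k \<ge> 1"
  shows "op_le (op_scal a) (cesaro \<phi> k P) \<and> op_le (cesaro \<phi> k P) (op_scal b)"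
proof -
  have i: "inner x (cesaro \<phi> k P x) = (1 / real k) * (\<Sum>j<k. inner x ((\<phi>^^j) P x))" for x
    by (simp add: cesaro_def inner_sum_right)
  have j: "inner (cJ x) (cesaro \<phi> k P x) = 0" for x
    using assms(1) by (simp add: cesaro_def inner_sum_right op_le_scal_left)
  have lo: "a * (norm x)^2 \<le> inner x (cesaro \<phi> k P x)" for x
  proof -
    have "(\<Sum>j<k. a * (norm x)^2) \<le> (\<Sum>j<k. inner x ((\<phi>^^j) P x))"
      using assms(1) by (intro sum_mono) (auto simp: op_le_scal_left)
    then show ?thesis using assms(2) by (simp add: i field_simps)
  qed
  have hi: "inner x (cesaro \<phi> k P x) \<le> b * (norm x)^2" for x
  proof -
    have "(\<Sum>j<k. inner x ((\<phi>^^j) P x)) \<le> (\<Sum>j<k. b * (norm x)^2)"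
      using assms(1) by (intro sum_mono) (auto simp: op_le_scal_right)
    then show ?thesis using assms(2) by (simp add: i field_simps)
  qed
  show ?thesis using lo hi j by (simp add: op_le_scal_left op_le_scal_right)
qed

lemma C4_C2:
  assumes c: "0 < c" "c \<le> d"
    and k: "\<forall>k\<ge>1. op_le (op_scal c) ((\<phi> ^^ k) op_id) \<and> op_le ((\<phi> ^^ k) op_id) (op_scal d)"
  shows "\<exists>a b. 0 < a \<and> a \<le> b \<and> (\<forall>k\<ge>1.
            op_le (op_scal a) (cesaro \<phi> k op_id) \<and> op_le (cesaro \<phi> k op_id) (op_scal b))"
proof -
  define a where "a = min c 1"
  define b where "b = max d 1"
  have all: "op_le (op_scal a) ((\<phi>^^j) op_id) \<and> op_le ((\<phi>^^j) op_id) (op_scal b)" for j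
  proof (cases "j = 0")
    case True then show ?thesis by (simp add: op_id_scal a_def b_def op_le_scal_mono)
  next
    case False
    then have "op_le (op_scal c) ((\<phi> ^^ j) op_id) \<and> op_le ((\<phi> ^^ j) op_id) (op_scal d)" using k by simp
    then show ?thesis
      using op_le_trans[OF op_le_scal_mono[of a c]] op_le_trans[OF _ op_le_scal_mono[of d b]]
      by (auto simp: a_def b_def)
  qed
  show ?thesis using cesaro_bounds[OF all] c by (intro exI[of _ a] exI[of _ b]) (auto simp: a_def b_def)
qed

lemma C2_C3:
  assumes "0 < a" "a \<le> b" "\<forall>k\<ge>1. op_le (op_scal a) (cesaro \<phi> k op_id) \<and> op_le (cesaro \<phi> k op_id) (op_scal b)"
  shows "\<exists>a b P. 0 < a \<and> a \<le> b \<and> invertible_op P \<and> positive_op P \<and> (\<forall>k\<ge>1.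
            op_le (op_scal a) (cesaro \<phi> k P) \<and> op_le (cesaro \<phi> k P) (op_scal b))"
  using assms invertible_op_id positive_op_id by blast

lemma sim_pow:
  assumes lmu: "linear_map \<mu>" and sim: "\<forall>X\<in>BH. \<phi> (R \<circ> X \<circ> adjoint R) = R \<circ> \<mu> X \<circ> adjoint R"
    and X: "bop X"
  shows "(\<phi>^^k) (R \<circ> X \<circ> adjoint R) = R \<circ> (\<mu>^^k) X \<circ> adjoint R"
proof (induction k)
  case (Suc k)
  have b: "(\<mu>^^k) X \<in> BH" using lm_pow_bop[OF lmu X] by (simp add: BH_iff)
  have eq: "(\<mu>^^Suc k) X = \<mu> ((\<mu>^^k) X)" by simp
  have "(\<phi>^^Suc k) (R \<circ> X \<circ> adjoint R) = \<phi> ((\<phi>^^k) (R \<circ> X \<circ> adjoint R))" by simp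
  also have "... = \<phi> (R \<circ> (\<mu>^^k) X \<circ> adjoint R)" by (simp only: Suc.IH)
  also have "... = R \<circ> \<mu> ((\<mu>^^k) X) \<circ> adjoint R" using sim b by blast
  finally have calc: "(\<phi>^^Suc k) (R \<circ> X \<circ> adjoint R) = R \<circ> \<mu> ((\<mu>^^k) X) \<circ> adjoint R" .
  show ?case unfolding eq by (rule calc)
qed simp

lemma C1_C4:
  assumes lm: "linear_map \<phi>" "positive_map \<phi>" and lmu: "linear_map \<mu>" and mu1: "\<mu> op_id = op_id"
    and sim: "similar \<phi> \<mu>"
  shows "\<exists>c d. 0 < c \<and> c \<le> d \<and> (\<forall>k\<ge>1.
            op_le (op_scal c) ((\<phi> ^^ k) op_id) \<and> op_le ((\<phi> ^^ k) op_id) (op_scal d))"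
proof -
  obtain R where R: "invertible_op R" and s: "\<forall>X\<in>BH. \<phi> (R \<circ> X \<circ> adjoint R) = R \<circ> \<mu> X \<circ> adjoint R"
    using sim by (auto simp: similar_def)
  obtain S where S: "bop S" "S \<circ> R = id" "R \<circ> S = id" and bR: "bop R" using R by (auto simp: invertible_op_def)
  define RR where "RR = R \<circ> op_id \<circ> adjoint R"
  have RRfix: "(\<phi>^^k) RR = RR" for k
  proof -
    have "(\<phi>^^k) RR = R \<circ> (\<mu>^^k) op_id \<circ> adjoint R"
      unfolding RR_def by (rule sim_pow[OF lmu s]) (simp add: op_id_id bop_id)
    also have "(\<mu>^^k) op_id = op_id" by (rule funpow_fix[of \<mu> op_id, OF mu1])
    finally show ?thesis by (simp only: RR_def)
  qed
  have bRR: "bop RR" unfolding RR_def op_id_id by (intro bop_o bR bop_id adjoint_bop)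
  have ci: "cinner x (RR x) = of_real ((norm (adjoint R x))^2)" for x
    by (simp add: RR_def op_id_def adjoint_prop2[OF bR, symmetric] cinner_self)
  have inner_RR: "inner x (RR x) = (norm (adjoint R x))^2" "inner (cJ x) (RR x) = 0" for x
    using arg_cong[OF ci[of x], of Re] arg_cong[OF ci[of x], of Im] by simp_all
  obtain K1 where K1: "K1 > 0" "\<And>x. norm (adjoint R x) \<le> norm x * K1" using adjoint_bound[OF bR] by blast
  obtain K2 where K2: "K2 > 0" "\<And>x. norm (adjoint S x) \<le> norm x * K2" using adjoint_bound[OF S(1)] by blast
  have SR: "adjoint S (adjoint R x) = x" for x
  proof -
    have "adjoint S \<circ> adjoint R = adjoint (R \<circ> S)" by (rule adjoint_comp[OF bR S(1), symmetric])
    also have "... = id" using S(3) adjoint_id by simp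
    finally show ?thesis by (metis comp_apply id_apply)
  qed
  define cR where "cR = 1 / K2^2"
  define dR where "dR = max (K1^2) cR"
  have cR: "cR > 0" using K2 by (simp add: cR_def)
  have lo: "op_le (op_scal cR) RR"
  proof -
    have "cR * (norm x)^2 \<le> (norm (adjoint R x))^2" for x
    proof -
      have "norm x \<le> norm (adjoint R x) * K2" using K2(2)[of "adjoint R x"] SR by simp
      then have "(norm x)^2 \<le> (norm (adjoint R x) * K2)^2" by (intro power_mono) auto
      then show ?thesis using K2 by (simp add: cR_def field_simps power_mult_distrib)
    qed
    then show ?thesis by (simp add: op_le_scal_left inner_RR)
  qed
  have hi: "op_le RR (op_scal dR)"
  proof -
    have "(norm (adjoint R x))^2 \<le> dR * (norm x)^2" for x
    proof -
      have "(norm (adjoint R x))^2 \<le> (norm x * K1)^2" using K1(2)[of x] by (intro power_mono) auto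
      also have "... = K1^2 * (norm x)^2" by (simp add: power_mult_distrib)
      also have "... \<le> dR * (norm x)^2" by (rule mult_right_mono) (auto simp: dR_def)
      finally show ?thesis .
    qed
    then show ?thesis by (simp add: op_le_scal_right inner_RR)
  qed
  have dR: "dR > 0" "cR \<le> dR" using cR by (auto simp: dR_def)
  have "cR / dR \<le> dR / cR" using cR dR
    by (metis divide_le_eq_1_pos divide_right_mono order.trans divide_self_if less_irrefl
        le_divide_eq_1_pos)
  then show ?thesis
    using transfer_bounds[OF lm bRR cR dR(1) lo hi] RRfix lo hi cR dR
    by (intro exI[of _ "cR / dR"] exI[of _ "dR / cR"]) auto
qed

section \<open>Operator power series\<close>

primrec bpow :: "('a::real_normed_vector \<Rightarrow>\<^sub>L 'a) \<Rightarrow> nat \<Rightarrow> ('a \<Rightarrow>\<^sub>L 'a)" where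
  "bpow A 0 = id_blinfun"
| "bpow A (Suc n) = A o\<^sub>L bpow A n"

lemma bpow_apply: "blinfun_apply (bpow A n) = (blinfun_apply A ^^ n)"
  by (induction n) (auto simp: fun_eq_iff)

lemma bpow_add: "bpow A (n + m) = bpow A n o\<^sub>L bpow A m"
  by (rule blinfun_eqI) (simp add: bpow_apply funpow_add)

lemma norm_bpow: "norm (bpow A n) \<le> norm A ^ n"
proof (induction n)
  case 0 then show ?case by (simp add: norm_blinfun_id_le)
next
  case (Suc n)
  have "norm (bpow A (Suc n)) \<le> norm A * norm (bpow A n)" by (simp add: norm_blinfun_compose)
  also have "... \<le> norm A * norm A ^ n" by (intro mult_left_mono Suc) auto
  finally show ?case by simp
qed

lemma blinfun_Cauchy_product_sums:
  fixes a b :: "nat \<Rightarrow> ('a::banach \<Rightarrow>\<^sub>L 'a)"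
  assumes a: "summable (\<lambda>k. norm (a k))"
    and b: "summable (\<lambda>k. norm (b k))"
  shows "(\<lambda>k. \<Sum>i\<le>k. a i o\<^sub>L b (k - i)) sums ((\<Sum>k. a k) o\<^sub>L (\<Sum>k. b k))"
proof -
  let ?S1 = "\<lambda>n::nat. {..<n} \<times> {..<n}"
  let ?S2 = "\<lambda>n::nat. {(i,j). i + j < n}"
  have S1_mono: "\<And>m n. m \<le> n \<Longrightarrow> ?S1 m \<subseteq> ?S1 n" by auto
  have S2_le_S1: "\<And>n. ?S2 n \<subseteq> ?S1 n" by auto
  have S1_le_S2: "\<And>n. ?S1 (n div 2) \<subseteq> ?S2 n" by auto
  have finite_S1: "\<And>n. finite (?S1 n)" by simp
  with S2_le_S1 have finite_S2: "\<And>n. finite (?S2 n)" by (rule finite_subset)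
  let ?g = "\<lambda>(i,j). a i o\<^sub>L b j"
  let ?f = "\<lambda>(i,j). norm (a i) * norm (b j)"
  have f_nonneg: "\<And>x. 0 \<le> ?f x" by auto
  then have norm_sum_f: "\<And>A. norm (sum ?f A) = sum ?f A"
    unfolding real_norm_def
    by (simp only: abs_of_nonneg sum_nonneg [rule_format])
  have prod_sum: "(\<Sum>k<n. a k) o\<^sub>L (\<Sum>k<n. b k) = sum ?g (?S1 n)" for n
  proof -
    have "(\<Sum>k<n. a k) o\<^sub>L (\<Sum>k<n. b k) = (\<Sum>i<n. a i o\<^sub>L (\<Sum>k<n. b k))"
      by (rule bounded_bilinear.sum_left[OF bounded_bilinear_blinfun_compose])
    also have "... = (\<Sum>i<n. \<Sum>j<n. a i o\<^sub>L b j)"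
      by (simp only: bounded_bilinear.sum_right[OF bounded_bilinear_blinfun_compose])
    also have "... = sum ?g (?S1 n)" by (simp add: sum.cartesian_product)
    finally show ?thesis .
  qed
  have "(\<lambda>n. (\<Sum>k<n. a k) o\<^sub>L (\<Sum>k<n. b k)) \<longlonglongrightarrow> ((\<Sum>k. a k) o\<^sub>L (\<Sum>k. b k))"
    by (intro bounded_bilinear.tendsto[OF bounded_bilinear_blinfun_compose]
        summable_LIMSEQ summable_norm_cancel [OF a] summable_norm_cancel [OF b])
  then have 1: "(\<lambda>n. sum ?g (?S1 n)) \<longlonglongrightarrow> ((\<Sum>k. a k) o\<^sub>L (\<Sum>k. b k))"
    by (simp only: prod_sum)
  have "(\<lambda>n. (\<Sum>k<n. norm (a k)) * (\<Sum>k<n. norm (b k))) \<longlonglongrightarrow> (\<Sum>k. norm (a k)) * (\<Sum>k. norm (b k))"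
    using a b by (intro tendsto_mult summable_LIMSEQ)
  then have "(\<lambda>n. sum ?f (?S1 n)) \<longlonglongrightarrow> (\<Sum>k. norm (a k)) * (\<Sum>k. norm (b k))"
    by (simp only: sum_product sum.Sigma [rule_format] finite_lessThan)
  then have "convergent (\<lambda>n. sum ?f (?S1 n))"
    by (rule convergentI)
  then have Cauchy: "Cauchy (\<lambda>n. sum ?f (?S1 n))"
    by (rule convergent_Cauchy)
  have "Zfun (\<lambda>n. sum ?f (?S1 n - ?S2 n)) sequentially"
  proof (rule ZfunI, simp only: eventually_sequentially norm_sum_f)
    fix r :: real
    assume r: "0 < r"
    from CauchyD [OF Cauchy r] obtain N
      where "\<forall>m\<ge>N. \<forall>n\<ge>N. norm (sum ?f (?S1 m) - sum ?f (?S1 n)) < r" ..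
    then have "\<And>m n. N \<le> n \<Longrightarrow> n \<le> m \<Longrightarrow> norm (sum ?f (?S1 m - ?S1 n)) < r"
      by (simp only: sum_diff finite_S1 S1_mono)
    then have N: "\<And>m n. N \<le> n \<Longrightarrow> n \<le> m \<Longrightarrow> sum ?f (?S1 m - ?S1 n) < r"
      by (simp only: norm_sum_f)
    show "\<exists>N. \<forall>n\<ge>N. sum ?f (?S1 n - ?S2 n) < r"
    proof (intro exI allI impI)
      fix n
      assume "2 * N \<le> n"
      then have n: "N \<le> n div 2" by simp
      have "sum ?f (?S1 n - ?S2 n) \<le> sum ?f (?S1 n - ?S1 (n div 2))"
        by (intro sum_mono2 finite_Diff finite_S1 f_nonneg Diff_mono subset_refl S1_le_S2)
      also have "\<dots> < r"
        using n div_le_dividend by (rule N)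
      finally show "sum ?f (?S1 n - ?S2 n) < r" .
    qed
  qed
  then have "Zfun (\<lambda>n. sum ?g (?S1 n - ?S2 n)) sequentially"
    apply (rule Zfun_le [rule_format])
    apply (simp only: norm_sum_f)
    apply (rule order_trans [OF norm_sum sum_mono])
    apply (auto simp add: norm_blinfun_compose)
    done
  then have 2: "(\<lambda>n. sum ?g (?S1 n) - sum ?g (?S2 n)) \<longlonglongrightarrow> 0"
    unfolding tendsto_Zfun_iff diff_0_right
    by (simp only: sum_diff finite_S1 S2_le_S1)
  with 1 have "(\<lambda>n. sum ?g (?S2 n)) \<longlonglongrightarrow> ((\<Sum>k. a k) o\<^sub>L (\<Sum>k. b k))"
    by (rule Lim_transform2)
  then show ?thesis
    by (simp only: sums_def sum.triangle_reindex)
qed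

lemma compose_id_right[simp]: "A o\<^sub>L id_blinfun = A"
  by (rule blinfun_eqI) simp

lemma compose_id_left[simp]: "id_blinfun o\<^sub>L A = A"
  by (rule blinfun_eqI) simp

definition pser :: "(nat \<Rightarrow> real) \<Rightarrow> ('a::banach \<Rightarrow>\<^sub>L 'a) \<Rightarrow> ('a \<Rightarrow>\<^sub>L 'a)" where
  "pser c A = (\<Sum>n. c n *\<^sub>R bpow A n)"

lemma pser_abs_summable:
  assumes "norm A \<le> r" "summable (\<lambda>n. \<bar>c n\<bar> * r ^ n)"
  shows "summable (\<lambda>n. norm (c n *\<^sub>R bpow A n))"
proof (rule summable_comparison_test[OF _ assms(2)])
  show "\<exists>N. \<forall>n\<ge>N. norm (norm (c n *\<^sub>R bpow A n)) \<le> \<bar>c n\<bar> * r ^ n"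
  proof (intro exI allI impI)
    fix n
    have "norm (bpow A n) \<le> r ^ n"
      using norm_bpow[of A n] power_mono[OF assms(1), of n] by simp
    then show "norm (norm (c n *\<^sub>R bpow A n)) \<le> \<bar>c n\<bar> * r ^ n"
      by (simp add: mult_left_mono)
  qed
qed

definition cauchy_coef :: "(nat \<Rightarrow> real) \<Rightarrow> (nat \<Rightarrow> real) \<Rightarrow> nat \<Rightarrow> real" where
  "cauchy_coef c d k = (\<Sum>i\<le>k. c i * d (k - i))"

lemma scaleR_compose: "(c *\<^sub>R X) o\<^sub>L (d *\<^sub>R Y) = (c * d) *\<^sub>R (X o\<^sub>L Y)"
  by (rule blinfun_eqI) (simp add: scaleR_blinfun.rep_eq blinfun.scaleR_right)

lemma pser_mult:
  assumes "norm A \<le> r" "summable (\<lambda>n. \<bar>c n\<bar> * r ^ n)" "summable (\<lambda>n. \<bar>d n\<bar> * r ^ n)"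
  shows "pser c A o\<^sub>L pser d A = pser (cauchy_coef c d) A"
proof -
  have "(\<lambda>k. \<Sum>i\<le>k. (c i *\<^sub>R bpow A i) o\<^sub>L (d (k - i) *\<^sub>R bpow A (k - i))) sums (pser c A o\<^sub>L pser d A)"
    unfolding pser_def
    by (rule blinfun_Cauchy_product_sums[OF pser_abs_summable[OF assms(1,2)] pser_abs_summable[OF assms(1,3)]])
  moreover have "(\<Sum>i\<le>k. (c i *\<^sub>R bpow A i) o\<^sub>L (d (k - i) *\<^sub>R bpow A (k - i))) = cauchy_coef c d k *\<^sub>R bpow A k" for k
  proof -
    have "(\<Sum>i\<le>k. (c i *\<^sub>R bpow A i) o\<^sub>L (d (k - i) *\<^sub>R bpow A (k - i))) = (\<Sum>i\<le>k. (c i * d (k - i)) *\<^sub>R bpow A k)"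
    proof (rule sum.cong[OF refl])
      fix i assume "i \<in> {..k}"
      then have "bpow A i o\<^sub>L bpow A (k - i) = bpow A k" using bpow_add[of A i "k - i"] by simp
      then show "(c i *\<^sub>R bpow A i) o\<^sub>L (d (k - i) *\<^sub>R bpow A (k - i)) = (c i * d (k - i)) *\<^sub>R bpow A k"
        by (simp add: scaleR_compose)
    qed
    also have "... = cauchy_coef c d k *\<^sub>R bpow A k" by (simp add: cauchy_coef_def scaleR_sum_left)
    finally show ?thesis .
  qed
  ultimately have "(\<lambda>k. cauchy_coef c d k *\<^sub>R bpow A k) sums (pser c A o\<^sub>L pser d A)" by simp
  then show ?thesis unfolding pser_def by (simp add: sums_unique)
qed

lemma cauchy_coef_commute: "cauchy_coef c d k = cauchy_coef d c k"
proof -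
  have "cauchy_coef c d k = (\<Sum>i=0..k. c i * d (k - i))" by (simp add: cauchy_coef_def atLeast0AtMost)
  also have "... = (\<Sum>i=0..k. c (k + 0 - i) * d (k - (k + 0 - i)))" by (rule sum.atLeastAtMost_rev)
  also have "... = (\<Sum>i=0..k. d i * c (k - i))" by (intro sum.cong) auto
  finally show ?thesis by (simp add: cauchy_coef_def atLeast0AtMost)
qed

lemma pser_finite:
  assumes "\<And>n. n \<ge> N \<Longrightarrow> c n = 0"
  shows "pser c A = (\<Sum>n<N. c n *\<^sub>R bpow A n)"
  unfolding pser_def using assms by (intro suminf_finite) auto

lemma pser_apply:
  assumes "summable (\<lambda>n. norm (c n *\<^sub>R bpow A n))"
  shows "blinfun_apply (pser c A) x = (\<Sum>n. c n *\<^sub>R (blinfun_apply A ^^ n) x)"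
proof -
  have "blinfun_apply (pser c A) x = (\<Sum>n. blinfun_apply (c n *\<^sub>R bpow A n) x)"
    unfolding pser_def
    by (rule bounded_linear.suminf[OF blinfun.bounded_linear_left summable_norm_cancel[OF assms]])
  then show ?thesis by (simp add: bpow_apply scaleR_blinfun.rep_eq)
qed

definition delta0 :: "nat \<Rightarrow> real" where "delta0 n = (if n = 0 then 1 else 0)"
definition onemx :: "nat \<Rightarrow> real" where "onemx n = (if n = 0 then 1 else if n = 1 then -1 else 0)"

lemma pser_delta0: "pser delta0 A = id_blinfun"
  using pser_finite[of 1 delta0 A] by (simp add: delta0_def)

lemma pser_onemx: "pser onemx A = id_blinfun - A"
proof -
  have "pser onemx A = (\<Sum>n<2. onemx n *\<^sub>R bpow A n)" by (rule pser_finite) (simp add: onemx_def)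
  also have "... = id_blinfun - A" by (simp add: onemx_def numeral_2_eq_2)
  finally show ?thesis .
qed

lemma summable_finite_coef: assumes "\<And>n. n \<ge> N \<Longrightarrow> c n = 0"
  shows "summable (\<lambda>n. \<bar>c n\<bar> * (r::real) ^ n)"
proof (rule summable_finite[of "{..<N}"])
  fix n assume "n \<notin> {..<N}"
  then have "c n = 0" using assms by simp
  then show "\<bar>c n\<bar> * r ^ n = 0" by simp
qed simp


lemma cauchy_one_onemx: "cauchy_coef onemx (\<lambda>_. 1) k = delta0 k"
proof (cases k)
  case 0 then show ?thesis by (simp add: cauchy_coef_def onemx_def delta0_def)
next
  case (Suc m)
  have "cauchy_coef onemx (\<lambda>_. 1) k = (\<Sum>i\<le>Suc m. onemx i)" by (simp add: cauchy_coef_def Suc)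
  also have "... = 0" by (induction m) (simp_all add: onemx_def)
  finally show ?thesis by (simp add: delta0_def Suc)
qed

lemma neumann_blinfun:
  fixes A :: "'a::banach \<Rightarrow>\<^sub>L 'a"
  assumes "norm A \<le> r" "r < 1"
  shows "pser (\<lambda>_. 1) A o\<^sub>L (id_blinfun - A) = id_blinfun"
    and "(id_blinfun - A) o\<^sub>L pser (\<lambda>_. 1) A = id_blinfun"
proof -
  have r0: "0 \<le> r" using assms(1) norm_ge_zero order_trans by blast
  have s1: "summable (\<lambda>n. \<bar>(\<lambda>_. 1::real) n\<bar> * r ^ n)" using r0 assms by (simp add: summable_geometric)
  have s2: "summable (\<lambda>n. \<bar>onemx n\<bar> * r ^ n)" by (rule summable_finite_coef[of 2]) (simp add: onemx_def)
  have c1: "cauchy_coef (\<lambda>_. 1) onemx = delta0"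
    by (rule ext) (simp only: cauchy_coef_commute[of "\<lambda>_. 1"] cauchy_one_onemx)
  have c2: "cauchy_coef onemx (\<lambda>_. 1) = delta0"
    by (rule ext) (simp only: cauchy_one_onemx)
  have "pser (\<lambda>_. 1) A o\<^sub>L pser onemx A = id_blinfun"
    using pser_mult[OF assms(1) s1 s2] by (simp only: c1 pser_delta0)
  then show "pser (\<lambda>_. 1) A o\<^sub>L (id_blinfun - A) = id_blinfun" by (simp only: pser_onemx)
  have "pser onemx A o\<^sub>L pser (\<lambda>_. 1) A = id_blinfun"
    using pser_mult[OF assms(1) s2 s1] by (simp only: c2 pser_delta0)
  then show "(id_blinfun - A) o\<^sub>L pser (\<lambda>_. 1) A = id_blinfun" by (simp only: pser_onemx)
qed

instance complex_hilbert \<subseteq> banach ..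

lemma bounded_linear_cinner_right: "bounded_linear (\<lambda>y. cinner x (y::'a::complex_hilbert))"
proof (rule bounded_linear_intro[where K="norm x"])
  show "cmod (cinner x y) \<le> norm y * norm x" for y using norm_cinner[of x y] by (simp add: mult.commute)
qed (auto simp: cinner_add_right cinner_scaleR_right scaleR_conv_of_real)

lemma bounded_linear_cinner_left: "bounded_linear (\<lambda>x. cinner x (y::'a::complex_hilbert))"
  by (rule bounded_linear_intro[where K="norm y"])
     (auto simp: cinner_add_left cinner_scaleR_left scaleR_conv_of_real norm_cinner)

lemma funpow_cJ: "bop T \<Longrightarrow> (T ^^ n) (cJ x) = cJ ((T ^^ n) x)"
  by (induction n) (auto simp: bop_cJ)

lemma funpow_selfadj: assumes "bop T" "\<And>x y. cinner (T x) y = cinner x (T y)"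
  shows "cinner ((T^^n) x) y = cinner x ((T^^n) y)"
proof (induction n arbitrary: x y)
  case (Suc n)
  have "cinner ((T^^Suc n) x) y = cinner (T ((T^^n) x)) y" by simp
  also have "... = cinner ((T^^n) x) (T y)" by (rule assms(2))
  also have "... = cinner x ((T^^n) (T y))" by (rule Suc)
  also have "(T^^n) (T y) = (T^^Suc n) y" by (simp add: funpow_swap1)
  finally show ?case .
qed simp

lemma pser_fun:
  fixes T :: "'a::complex_hilbert \<Rightarrow> 'a"
  assumes T: "bop T" and r: "norm (Blinfun T) \<le> r" and c: "summable (\<lambda>n. \<bar>c n\<bar> * r ^ n)"
  defines "P \<equiv> blinfun_apply (pser c (Blinfun T))"
  shows "P x = (\<Sum>n. c n *\<^sub>R (T ^^ n) x)" "summable (\<lambda>n. c n *\<^sub>R (T ^^ n) x)" "bop P"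
    "(\<And>x y. cinner (T x) y = cinner x (T y)) \<Longrightarrow> cinner (P x) y = cinner x (P y)"
proof -
  have bT: "blinfun_apply (Blinfun T) = T" using T bop_bl bounded_linear_Blinfun_apply by blast
  have s: "summable (\<lambda>n. norm (c n *\<^sub>R bpow (Blinfun T) n))" by (rule pser_abs_summable[OF r c])
  have Papp: "P x = (\<Sum>n. c n *\<^sub>R (T ^^ n) x)" for x unfolding P_def using pser_apply[OF s] bT by simp
  have sx: "summable (\<lambda>n. c n *\<^sub>R (T ^^ n) x)" for x
  proof -
    have "summable (\<lambda>n. blinfun_apply (c n *\<^sub>R bpow (Blinfun T) n) x)"
      by (rule bounded_linear.summable[OF blinfun.bounded_linear_left summable_norm_cancel[OF s]])
    then show ?thesis by (simp add: scaleR_blinfun.rep_eq bpow_apply bT)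
  qed
  show "P x = (\<Sum>n. c n *\<^sub>R (T ^^ n) x)" by (rule Papp)
  show "summable (\<lambda>n. c n *\<^sub>R (T ^^ n) x)" by (rule sx)
  show "bop P"
  proof (rule bopI)
    show "bounded_linear P" unfolding P_def by (rule blinfun.bounded_linear_right)
    fix x
    have "P (cJ x) = (\<Sum>n. cJ (c n *\<^sub>R (T ^^ n) x))"
      by (simp add: Papp funpow_cJ[OF T] cJ_scaleR)
    also have "... = cJ (\<Sum>n. c n *\<^sub>R (T ^^ n) x)"
      by (rule bounded_linear.suminf[OF bounded_linear_cJ sx, symmetric])
    finally show "P (cJ x) = cJ (P x)" by (simp add: Papp)
  qed
  assume sa: "\<And>x y. cinner (T x) y = cinner x (T y)"
  have "cinner (P x) y = (\<Sum>n. cinner (c n *\<^sub>R (T ^^ n) x) y)"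
    unfolding Papp by (rule bounded_linear.suminf[OF bounded_linear_cinner_left sx])
  also have "... = (\<Sum>n. cinner x (c n *\<^sub>R (T ^^ n) y))"
    by (simp add: cinner_scaleR_left cinner_scaleR_right funpow_selfadj[OF T sa])
  also have "... = cinner x (P y)"
    unfolding Papp by (rule bounded_linear.suminf[OF bounded_linear_cinner_right sx, symmetric])
  finally show "cinner (P x) y = cinner x (P y)" .
qed

definition sqc :: "nat \<Rightarrow> real" where "sqc n = (-1)^n * ((1/2) gchoose n)"

lemma gchoose_half_bound: "\<bar>(1/2::real) gchoose n\<bar> \<le> 1"
proof (induction n)
  case 0 then show ?case by simp
next
  case (Suc n)
  define a :: real where "a = 1/2"
  have rec: "of_nat (Suc n) * (a gchoose Suc n) = (a - of_nat n) * (a gchoose n)"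
    using gbinomial_absorption[of n a] gbinomial_absorb_comp[of a n] by simp
  have "\<bar>a - of_nat n\<bar> \<le> of_nat (Suc n)" by (simp add: a_def)
  then have "\<bar>a - of_nat n\<bar> * \<bar>a gchoose n\<bar> \<le> of_nat (Suc n) * 1"
    using Suc by (intro mult_mono) (auto simp: a_def)
  then have "\<bar>(a - of_nat n) * (a gchoose n)\<bar> \<le> of_nat (Suc n) * 1"
    by (simp add: abs_mult)
  then have "of_nat (Suc n) * \<bar>a gchoose Suc n\<bar> \<le> of_nat (Suc n) * 1"
    using rec by (metis abs_mult abs_of_nat)
  then show ?case by (simp add: a_def)
qed

lemma sqc_bound: "\<bar>sqc n\<bar> \<le> 1"
  using gchoose_half_bound[of n] by (simp add: sqc_def abs_mult)

lemma sqc_summable: assumes "0 \<le> r" "r < (1::real)" shows "summable (\<lambda>n. \<bar>sqc n\<bar> * r ^ n)"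
proof (rule summable_comparison_test[of _ "\<lambda>n. r ^ n"])
  show "\<exists>N. \<forall>n\<ge>N. norm (\<bar>sqc n\<bar> * r ^ n) \<le> r ^ n"
    using sqc_bound assms by (auto intro!: mult_left_le_one_le)
  show "summable (\<lambda>n. r ^ n)" using assms by (simp add: summable_geometric)
qed

lemma sqc_square: "cauchy_coef sqc sqc k = onemx k"
proof -
  have "cauchy_coef sqc sqc k = (\<Sum>i=0..k. (-1)^k * (((1/2::real) gchoose i) * ((1/2) gchoose (k - i))))"
    unfolding cauchy_coef_def sqc_def atLeast0AtMost[symmetric]
  proof (rule sum.cong[OF refl])
    fix i assume "i \<in> {0..k}"
    then have "(-1::real)^i * (-1)^(k-i) = (-1)^k" by (simp flip: power_add)
    then show "(-1::real) ^ i * ((1 / 2::real) gchoose i) * ((-1) ^ (k - i) * ((1 / 2::real) gchoose (k - i))) =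
          (-1) ^ k * (((1 / 2::real) gchoose i) * ((1 / 2::real) gchoose (k - i)))"
    proof -
      have "(-1::real) ^ i * ((1 / 2::real) gchoose i) * ((-1) ^ (k - i) * ((1 / 2::real) gchoose (k - i))) =
          ((-1) ^ i * (-1) ^ (k - i)) * (((1 / 2::real) gchoose i) * ((1 / 2::real) gchoose (k - i)))"
        by (simp only: mult_ac)
      then show ?thesis using \<open>(-1::real)^i * (-1)^(k-i) = (-1)^k\<close> by simp
    qed
  qed
  also have "... = (-1)^k * ((1/2 + 1/2::real) gchoose k)"
    by (simp add: sum_distrib_left[symmetric] gbinomial_Vandermonde)
  also have "(1/2 + 1/2::real) gchoose k = of_nat (1 choose k)" by (simp add: binomial_gbinomial)
  finally have e: "cauchy_coef sqc sqc k = (-1)^k * of_nat (1 choose k)" .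
  show ?thesis
  proof (cases "k \<le> 1")
    case True
    then have "k = 0 \<or> k = 1" by auto
    then show ?thesis using e by (auto simp: onemx_def)
  next
    case False
    then show ?thesis using e by (simp add: onemx_def binomial_eq_0)
  qed
qed

lemma blinfun_norm_le: "bop T \<Longrightarrow> (\<And>x. norm (T x) \<le> r * norm x) \<Longrightarrow> 0 \<le> r \<Longrightarrow> norm (Blinfun T) \<le> r"
  by (rule norm_blinfun_bound) (auto simp: bounded_linear_Blinfun_apply bop_bl)

lemma op_sqrt:
  fixes T :: "'a::complex_hilbert \<Rightarrow> 'a"
  assumes T: "bop T" "\<And>x y. cinner (T x) y = cinner x (T y)" "\<And>x. norm (T x) \<le> r * norm x"
    and r: "0 \<le> r" "r < 1"
  shows "\<exists>S. bop S \<and> (\<forall>x y. cinner (S x) y = cinner x (S y)) \<and> (\<forall>x. S (S x) = x - T x)"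
proof -
  have nr: "norm (Blinfun T) \<le> r" by (rule blinfun_norm_le[OF T(1) T(3) r(1)])
  have bT: "blinfun_apply (Blinfun T) = T" using T bop_bl bounded_linear_Blinfun_apply by blast
  have sq: "summable (\<lambda>n. \<bar>sqc n\<bar> * r ^ n)" by (rule sqc_summable[OF r])
  define S where "S = blinfun_apply (pser sqc (Blinfun T))"
  have "pser sqc (Blinfun T) o\<^sub>L pser sqc (Blinfun T) = pser onemx (Blinfun T)"
    using pser_mult[OF nr sq sq] by (simp add: sqc_square[abs_def])
  also have "... = id_blinfun - Blinfun T" by (rule pser_onemx)
  finally have "S (S x) = x - T x" for x
    unfolding S_def by (metis blinfun_apply_blinfun_compose blinfun.diff_left bT blinfun_apply_id_blinfun)
  then show ?thesis
    using pser_fun(3,4)[OF T(1) nr sq] T(2) unfolding S_def by blast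
qed

lemma op_neumann:
  fixes T :: "'a::complex_hilbert \<Rightarrow> 'a"
  assumes T: "bop T" "\<And>x. norm (T x) \<le> r * norm x" and r: "0 \<le> r" "r < 1"
  shows "\<exists>N. bop N \<and> (\<forall>x. N (x - T x) = x) \<and> (\<forall>x. N x - T (N x) = x)"
proof -
  have nr: "norm (Blinfun T) \<le> r" by (rule blinfun_norm_le[OF T(1) T(2) r(1)])
  have bT: "blinfun_apply (Blinfun T) = T" using T bop_bl bounded_linear_Blinfun_apply by blast
  have s1: "summable (\<lambda>n. \<bar>(\<lambda>_. 1::real) n\<bar> * r ^ n)" using r by (simp add: summable_geometric)
  define N where "N = blinfun_apply (pser (\<lambda>_. 1) (Blinfun T))"
  have e1: "N (x - T x) = x" for x
    using arg_cong[OF neumann_blinfun(1)[OF nr r(2)], of "\<lambda>B. blinfun_apply B x"]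
    unfolding N_def by (simp add: blinfun.diff_left bT)
  have e2: "N x - T (N x) = x" for x
    using arg_cong[OF neumann_blinfun(2)[OF nr r(2)], of "\<lambda>B. blinfun_apply B x"]
    unfolding N_def by (simp add: blinfun.diff_left bT)
  show ?thesis using pser_fun(3)[OF T(1) nr s1] e1 e2 unfolding N_def by blast
qed

section \<open>The weak* topology\<close>

definition ssum :: "(nat \<Rightarrow> 'a::complex_hilbert) \<Rightarrow> bool" where
  "ssum xs \<longleftrightarrow> summable (\<lambda>n. (norm (xs n))^2)"

definition wsb :: "('a::complex_hilbert \<Rightarrow> 'a) set set" where
  "wsb = insert BH {{X \<in> BH. sw_functional xs ys X \<in> U} | xs ys U.
        summable (\<lambda>n. (norm (xs n))\<^sup>2) \<and> summable (\<lambda>n. (norm (ys n))\<^sup>2) \<and> open U}"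

lemma wstar_top_eq: "wstar_top = topology_generated_by wsb"
  by (simp add: wstar_top_def wsb_def)

lemma topspace_wstar[simp]: "topspace wstar_top = BH"
  unfolding wstar_top_eq topology_generated_by_topspace by (auto simp: wsb_def)

lemma openin_wstar_basic:
  "ssum xs \<Longrightarrow> ssum ys \<Longrightarrow> open U \<Longrightarrow> openin wstar_top {X \<in> BH. sw_functional xs ys X \<in> U}"
  unfolding wstar_top_eq by (rule topology_generated_by_Basis) (auto simp: wsb_def ssum_def)

lemma continuous_map_wstar_intoI:
  fixes f :: "'x \<Rightarrow> ('a::complex_hilbert \<Rightarrow> 'a)"
  assumes f: "\<And>x. x \<in> topspace X \<Longrightarrow> f x \<in> BH"
    and pre: "\<And>xs ys U. ssum xs \<Longrightarrow> ssum ys \<Longrightarrow> open U \<Longrightarrow>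
               openin X {x \<in> topspace X. sw_functional xs ys (f x) \<in> U}"
  shows "continuous_map X wstar_top f"
  unfolding continuous_map_def
proof (intro conjI allI impI)
  show "f \<in> topspace X \<rightarrow> topspace wstar_top" using f by auto
  fix V :: "('a \<Rightarrow> 'a) set" assume "openin wstar_top V"
  then have "generate_topology_on wsb V" unfolding wstar_top_eq by (rule openin_topology_generated_by)
  then show "openin X {x \<in> topspace X. f x \<in> V}"
  proof (induction rule: generate_topology_on.induct)
    case Empty then show ?case by simp
  next
    case (Int a b)
    have "{x \<in> topspace X. f x \<in> a \<inter> b} = {x \<in> topspace X. f x \<in> a} \<inter> {x \<in> topspace X. f x \<in> b}" by auto
    then show ?case using Int by (simp add: openin_Int)
  next
    case (UN K)
    have "{x \<in> topspace X. f x \<in> \<Union>K} = (\<Union>k\<in>K. {x \<in> topspace X. f x \<in> k})" by auto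
    then show ?case using UN by (auto intro!: openin_Union)
  next
    case (Basis s)
    then consider "s = BH" | xs ys U where "s = {X \<in> BH. sw_functional xs ys X \<in> U}" "ssum xs" "ssum ys" "open U"
      unfolding wsb_def ssum_def by blast
    then show ?case
    proof cases
      case 1
      then have "{x \<in> topspace X. f x \<in> s} = topspace X" using f by auto
      then show ?thesis by simp
    next
      case 2
      then have "{x \<in> topspace X. f x \<in> s} = {x \<in> topspace X. sw_functional xs ys (f x) \<in> U}" using f by auto
      then show ?thesis using pre[OF 2(2-4)] by simp
    qed
  qed
qed

lemma limitin_wstarI:
  fixes f :: "'x \<Rightarrow> ('a::complex_hilbert \<Rightarrow> 'a)"
  assumes l: "l \<in> BH" and ev: "\<forall>\<^sub>F k in F. f k \<in> BH"
    and t: "\<And>xs ys. ssum xs \<Longrightarrow> ssum ys \<Longrightarrow> ((\<lambda>k. sw_functional xs ys (f k)) \<longlongrightarrow> sw_functional xs ys l) F"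
  shows "limitin wstar_top f l F"
  unfolding limitin_def
proof (intro conjI allI impI)
  show "l \<in> topspace wstar_top" using l by simp
  fix V :: "('a \<Rightarrow> 'a) set" assume "openin wstar_top V \<and> l \<in> V"
  then have g: "generate_topology_on wsb V" and lV: "l \<in> V"
    unfolding wstar_top_eq using openin_topology_generated_by by auto
  have "l \<in> V \<longrightarrow> (\<forall>\<^sub>F k in F. f k \<in> V)" using g
  proof (induction rule: generate_topology_on.induct)
    case Empty then show ?case by simp
  next
    case (Int a b) then show ?case by (auto intro: eventually_conj)
  next
    case (UN K)
    show ?case
    proof (intro impI)
      assume "l \<in> \<Union>K"
      then obtain k where "k \<in> K" "l \<in> k" by auto
      then have "\<forall>\<^sub>F x in F. f x \<in> k" using UN by blast
      then show "\<forall>\<^sub>F x in F. f x \<in> \<Union>K" using \<open>k \<in> K\<close> by (auto elim: eventually_mono)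
    qed
  next
    case (Basis s)
    then consider "s = BH" | xs ys U where "s = {X \<in> BH. sw_functional xs ys X \<in> U}" "ssum xs" "ssum ys" "open U"
      unfolding wsb_def ssum_def by blast
    then show ?case
    proof cases
      case 1 then show ?thesis using ev by simp
    next
      case 2
      show ?thesis
      proof (intro impI)
        assume "l \<in> s"
        then have "sw_functional xs ys l \<in> U" using 2 by auto
        then have "\<forall>\<^sub>F k in F. sw_functional xs ys (f k) \<in> U"
          using topological_tendstoD[OF t[OF 2(2,3)] 2(4)] by blast
        then show "\<forall>\<^sub>F k in F. f k \<in> s" using ev unfolding 2(1) by (auto elim: eventually_elim2)
      qed
    qed
  qed
  then show "\<forall>\<^sub>F x in F. f x \<in> V" using lV by blast
qed

lemma limitin_wstarD:
  assumes "limitin wstar_top f l F" "ssum xs" "ssum ys"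
  shows "((\<lambda>k. sw_functional xs ys (f k)) \<longlongrightarrow> sw_functional xs ys l) F"
proof (rule topological_tendstoI)
  fix U assume U: "open U" "sw_functional xs ys l \<in> U"
  have l: "l \<in> BH" using assms(1) by (simp add: limitin_def)
  have "openin wstar_top {X \<in> BH. sw_functional xs ys X \<in> U}" by (rule openin_wstar_basic[OF assms(2,3) U(1)])
  then have "\<forall>\<^sub>F k in F. f k \<in> {X \<in> BH. sw_functional xs ys X \<in> U}"
    using assms(1) U l unfolding limitin_def by blast
  then show "\<forall>\<^sub>F k in F. sw_functional xs ys (f k) \<in> U" by (auto elim: eventually_mono)
qed

lemma limitin_wstar_BH: "limitin wstar_top f l F \<Longrightarrow> l \<in> BH"
  by (simp add: limitin_def)

definition single :: "'a::complex_hilbert \<Rightarrow> nat \<Rightarrow> 'a" where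
  "single x n = (if n = 0 then x else 0)"

lemma ssum_single: "ssum (single x)"
  unfolding ssum_def single_def by (rule summable_finite[of "{0}"]) auto

lemma sw_single: "bop X \<Longrightarrow> sw_functional (single x) (single y) X = cinner x (X y)"
  unfolding sw_functional_def single_def
  by (subst suminf_finite[of "{0}"]) (auto simp: bop_zero_arg)

lemma ssum_bop: assumes "ssum xs" "bop A" shows "ssum (\<lambda>n. A (xs n))"
proof -
  obtain K where K: "K > 0" "\<And>x. norm (A x) \<le> norm x * K" using bop_bound assms(2) by blast
  show ?thesis unfolding ssum_def
  proof (rule summable_comparison_test[of _ "\<lambda>n. K^2 * (norm (xs n))^2"])
    show "\<exists>N. \<forall>n\<ge>N. norm ((norm (A (xs n)))\<^sup>2) \<le> K\<^sup>2 * (norm (xs n))\<^sup>2"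
    proof (intro exI allI impI)
      fix n
      have "(norm (A (xs n)))^2 \<le> (norm (xs n) * K)^2" using K(2) by (intro power_mono) auto
      then show "norm ((norm (A (xs n)))\<^sup>2) \<le> K\<^sup>2 * (norm (xs n))\<^sup>2" by (simp add: power_mult_distrib mult.commute)
    qed
    show "summable (\<lambda>n. K\<^sup>2 * (norm (xs n))\<^sup>2)" using assms(1) by (simp add: ssum_def summable_mult)
  qed
qed

lemma sw_comp: assumes "bop A" "bop B"
  shows "sw_functional xs ys (A \<circ> X \<circ> B) = sw_functional (\<lambda>n. adjoint A (xs n)) (\<lambda>n. B (ys n)) X"
  unfolding sw_functional_def by (simp add: adjoint_prop2[OF assms(1)])

lemma continuous_map_sandwich:
  fixes A B :: "'a::complex_hilbert \<Rightarrow> 'a"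
  assumes "bop A" "bop B"
  shows "continuous_map wstar_top wstar_top (\<lambda>X. A \<circ> X \<circ> B)"
proof (rule continuous_map_wstar_intoI)
  show "A \<circ> X \<circ> B \<in> BH" if "X \<in> topspace wstar_top" for X
    using that assms by (simp add: BH_iff bop_o)
  fix xs ys :: "nat \<Rightarrow> 'a" and U :: "complex set" assume h: "ssum xs" "ssum ys" "open U"
  have "{X \<in> topspace wstar_top. sw_functional xs ys (A \<circ> X \<circ> B) \<in> U} =
        {X \<in> BH. sw_functional (\<lambda>n. adjoint A (xs n)) (\<lambda>n. B (ys n)) X \<in> U}"
    by (simp add: sw_comp[OF assms])
  also have "openin wstar_top ..."
    by (rule openin_wstar_basic[OF ssum_bop[OF h(1) adjoint_bop[OF assms(1)]] ssum_bop[OF h(2) assms(2)] h(3)])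
  finally show "openin wstar_top {X \<in> topspace wstar_top. sw_functional xs ys (A \<circ> X \<circ> B) \<in> U}" .
qed

section \<open>Invertibility and square roots of positive operators\<close>

lemma pos_herm2: "positive_op Q \<Longrightarrow> cinner (Q x) y = cinner x (Q y)"
  by (metis cinner_commute complex_cnj_cnj pos_herm)

lemma pos_bounds_invertible:
  assumes Q: "positive_op Q" and a: "0 < a" "op_le (op_scal a) Q" "op_le Q (op_scal b)"
  shows "invertible_op Q"
proof -
  define b' where "b' = max b a"
  have b': "b' > 0" "a \<le> b'" "op_le Q (op_scal b')"
    using a op_le_trans[OF a(3) op_le_scal_mono[of b b']] by (auto simp: b'_def)
  have bQ: "bop Q" using Q by (simp add: positive_op_iff)
  define T where "T = (\<lambda>x. x - (1/b') *\<^sub>R Q x)"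
  have bT: "bop T" unfolding T_def by (intro bop_minus bop_ident bop_scaleR bQ)
  have iT: "inner x (T x) = (norm x)^2 - (1/b') * inner x (Q x)" for x
    by (simp add: T_def inner_diff_right power2_norm_eq_inner)
  have jT: "inner (cJ x) (T x) = 0" for x
    using Q by (simp add: T_def inner_diff_right positive_op_iff)
  have Qx: "a * (norm x)^2 \<le> inner x (Q x)" "inner x (Q x) \<le> b' * (norm x)^2" for x
    using a(2) b'(3) by (auto simp: op_le_scal_left op_le_scal_right)
  have Tpos: "positive_op T"
  proof -
    have "(1/b') * inner x (Q x) \<le> (norm x)^2" for x
      using Qx(2)[of x] b'(1) by (simp add: field_simps)
    then show ?thesis using bT jT by (simp add: positive_op_iff iT)
  qed
  define r where "r = 1 - a / b'"
  have Tle: "op_le T (op_scal r)"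
  proof -
    have "(norm x)^2 - (1/b') * inner x (Q x) \<le> r * (norm x)^2" for x
    proof -
      have "(a / b') * (norm x)^2 \<le> (1/b') * inner x (Q x)"
        using Qx(1)[of x] b'(1) by (simp add: field_simps)
      then show ?thesis by (simp add: r_def algebra_simps)
    qed
    then show ?thesis using jT by (simp add: op_le_scal_right iT)
  qed
  have r: "0 \<le> r" "r < 1" using a b' by (auto simp: r_def field_simps)
  have nT: "norm (T x) \<le> r * norm x" for x by (rule pos_norm_bound[OF Tpos Tle r(1)])
  obtain N where N: "bop N" "\<And>x. N (x - T x) = x" "\<And>x. N x - T (N x) = x"
    using op_neumann[OF bT nT r] by blast
  have xT: "x - T x = (1/b') *\<^sub>R Q x" for x by (simp add: T_def)
  define S where "S = (\<lambda>y. N ((1/b') *\<^sub>R y))"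
  have bS: "bop S" unfolding S_def by (intro bop_compose[OF N(1)] bop_scaleR bop_ident)
  have SQ: "S (Q x) = x" for x using N(2)[of x] by (simp add: S_def xT)
  have QN: "Q (N z) = b' *\<^sub>R z" for z
  proof -
    have "(1/b') *\<^sub>R Q (N z) = z" using N(3)[of z] xT[of "N z"] by simp
    then have "b' *\<^sub>R ((1/b') *\<^sub>R Q (N z)) = b' *\<^sub>R z" by simp
    then show ?thesis using b'(1) by simp
  qed
  have QS: "Q (S y) = y" for y using QN[of "(1/b') *\<^sub>R y"] b'(1) by (simp add: S_def)
  show ?thesis unfolding invertible_op_def using bQ bS SQ QS by (auto intro!: exI[of _ S] simp: fun_eq_iff)
qed

lemma pos_sqrt:
  assumes Q: "positive_op Q" "invertible_op Q"
  shows "\<exists>R. invertible_op R \<and> bop R \<and> (\<forall>x y. cinner (R x) y = cinner x (R y)) \<and> (\<forall>x. R (R x) = Q x)"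
proof -
  obtain c where c: "c > 0" "op_le (op_scal c) Q" using pos_inv_lower Q by blast
  obtain d0 where d0: "d0 > 0" "op_le Q (op_scal d0)" using pos_upper Q by blast
  define d where "d = max d0 c"
  have d: "d > 0" "c \<le> d" "op_le Q (op_scal d)"
    using c d0 op_le_trans[OF d0(2) op_le_scal_mono[of d0 d]] by (auto simp: d_def)
  have bQ: "bop Q" using Q by (simp add: positive_op_iff)
  define T where "T = (\<lambda>x. x - (1/d) *\<^sub>R Q x)"
  have bT: "bop T" unfolding T_def by (intro bop_minus bop_ident bop_scaleR bQ)
  have saT: "cinner (T x) y = cinner x (T y)" for x y
    by (simp add: T_def cinner_diff_left cinner_diff_right cinner_scaleR_left cinner_scaleR_right pos_herm2[OF Q(1)])
  have iT: "inner x (T x) = (norm x)^2 - (1/d) * inner x (Q x)" for x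
    by (simp add: T_def inner_diff_right power2_norm_eq_inner)
  have jT: "inner (cJ x) (T x) = 0" for x
    using Q by (simp add: T_def inner_diff_right positive_op_iff)
  have Qx: "c * (norm x)^2 \<le> inner x (Q x)" "inner x (Q x) \<le> d * (norm x)^2" for x
    using c(2) d(3) by (auto simp: op_le_scal_left op_le_scal_right)
  have Tpos: "positive_op T"
  proof -
    have "(1/d) * inner x (Q x) \<le> (norm x)^2" for x
      using Qx(2)[of x] d(1) by (simp add: field_simps)
    then show ?thesis using bT jT by (simp add: positive_op_iff iT)
  qed
  define r where "r = 1 - c / d"
  have Tle: "op_le T (op_scal r)"
  proof -
    have "(norm x)^2 - (1/d) * inner x (Q x) \<le> r * (norm x)^2" for x
    proof -
      have "(c / d) * (norm x)^2 \<le> (1/d) * inner x (Q x)"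
        using Qx(1)[of x] d(1) by (simp add: field_simps)
      then show ?thesis by (simp add: r_def algebra_simps)
    qed
    then show ?thesis using jT by (simp add: op_le_scal_right iT)
  qed
  have r: "0 \<le> r" "r < 1" using c d by (auto simp: r_def field_simps)
  have nT: "norm (T x) \<le> r * norm x" for x by (rule pos_norm_bound[OF Tpos Tle r(1)])
  obtain S where S: "bop S" "\<forall>x y. cinner (S x) y = cinner x (S y)" "\<forall>x. S (S x) = x - T x"
    using op_sqrt[OF bT saT nT r] by blast
  define R where "R = (\<lambda>x. sqrt d *\<^sub>R S x)"
  have bR: "bop R" unfolding R_def by (intro bop_scaleR S(1))
  have RR: "R (R x) = Q x" for x
  proof -
    have "R (R x) = (sqrt d * sqrt d) *\<^sub>R S (S x)" by (simp add: R_def bop_scaleR_arg[OF S(1)])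
    also have "... = d *\<^sub>R ((1/d) *\<^sub>R Q x)" using d(1) S(3) by (simp add: T_def)
    finally show ?thesis using d(1) by simp
  qed
  have saR: "cinner (R x) y = cinner x (R y)" for x y
    using S(2) by (simp add: R_def cinner_scaleR_left cinner_scaleR_right)
  obtain Qi where Qi: "bop Qi" "Qi \<circ> Q = id" "Q \<circ> Qi = id" using Q(2) by (auto simp: invertible_op_def)
  have Qi1: "Qi (Q x) = x" "Q (Qi x) = x" for x using Qi by (metis comp_apply id_apply)+
  have RQ: "R (Q x) = Q (R x)" for x by (simp add: RR[symmetric])
  have QiR: "Qi (R x) = R (Qi x)" for x
  proof -
    have "Qi (R x) = Qi (R (Q (Qi x)))" by (simp add: Qi1)
    also have "... = Qi (Q (R (Qi x)))" by (simp add: RQ)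
    finally show ?thesis by (simp add: Qi1)
  qed
  define V where "V = (\<lambda>x. Qi (R x))"
  have bV: "bop V" unfolding V_def by (rule bop_compose[OF Qi(1) bR])
  have "R (V x) = x" for x by (simp add: V_def QiR RR Qi1)
  moreover have "V (R x) = x" for x by (simp add: V_def RR Qi1)
  ultimately have "invertible_op R" unfolding invertible_op_def using bR bV
    by (auto intro!: exI[of _ V] simp: fun_eq_iff)
  then show ?thesis using bR saR RR by blast
qed

lemma sandwich_pos:
  assumes A: "bop A" "\<And>x y. cinner (A x) y = cinner x (A y)" and P: "positive_op P"
  shows "positive_op (A \<circ> P \<circ> A)"
proof -
  have bP: "bop P" using P by (simp add: positive_op_iff)
  have e: "cinner x (A (P (A x))) = cinner (A x) (P (A x))" for x by (simp add: A(2))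
  have "inner x (A (P (A x))) = inner (A x) (P (A x))" "inner (cJ x) (A (P (A x))) = inner (cJ (A x)) (P (A x))" for x
    using arg_cong[OF e[of x], of Re] arg_cong[OF e[of x], of Im] by simp_all
  then show ?thesis using P A(1) bP by (simp add: positive_op_iff bop_o)
qed

lemma C6_C1:
  fixes \<phi> :: "('a::complex_hilbert \<Rightarrow> 'a) \<Rightarrow> ('a \<Rightarrow> 'a)"
  assumes wpl: "wstar_pos_linear \<phi>" and Q: "invertible_op Q" "positive_op Q" "\<phi> Q = Q"
  shows "\<exists>\<mu>. wstar_pos_linear \<mu> \<and> \<mu> op_id = op_id \<and> similar \<phi> \<mu>"
proof -
  have lm: "linear_map \<phi>" and pm: "positive_map \<phi>" and wc: "wstar_continuous \<phi>"
    using wpl by (auto simp: wstar_pos_linear_def)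
  obtain R where R: "invertible_op R" "bop R" "\<And>x y. cinner (R x) y = cinner x (R y)" "\<And>x. R (R x) = Q x"
    using pos_sqrt[OF Q(2,1)] by blast
  obtain Ri where Ri: "bop Ri" "Ri \<circ> R = id" "R \<circ> Ri = id" using R(1) by (auto simp: invertible_op_def)
  have Ri1: "Ri (R x) = x" "R (Ri x) = x" for x using Ri by (metis comp_apply id_apply)+
  have adjR: "adjoint R = R" by (rule adjoint_selfadj[OF R(2)]) (use R(3) in auto)
  have saRi: "cinner (Ri x) y = cinner x (Ri y)" for x y
  proof -
    have "cinner (Ri x) y = cinner (Ri x) (R (Ri y))" by (simp add: Ri1)
    also have "... = cinner (R (Ri x)) (Ri y)" by (simp add: R(3))
    finally show ?thesis by (simp add: Ri1)
  qed
  define \<mu> where "\<mu> X = Ri \<circ> \<phi> (R \<circ> X \<circ> R) \<circ> Ri" for X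
  have RXR: "bop X \<Longrightarrow> bop (R \<circ> X \<circ> R)" for X by (intro bop_o R(2))
  have lmu: "linear_map \<mu>"
    unfolding linear_map_def
  proof (intro conjI ballI allI)
    fix X :: "'a \<Rightarrow> 'a" assume "X \<in> BH"
    then show "\<mu> X \<in> BH" unfolding \<mu>_def BH_iff by (intro bop_o Ri(1) lm_bop[OF lm] RXR)
  next
    fix X Y :: "'a \<Rightarrow> 'a" and c :: complex assume XY: "X \<in> BH" "Y \<in> BH"
    have e1: "R \<circ> (\<lambda>x. cscale c (X x) + Y x) \<circ> R = (\<lambda>x. cscale c ((R \<circ> X \<circ> R) x) + (R \<circ> Y \<circ> R) x)"
      by (simp add: fun_eq_iff bop_add_arg[OF R(2)] bop_cscale_arg[OF R(2)])
    have "\<phi> (R \<circ> (\<lambda>x. cscale c (X x) + Y x) \<circ> R) = (\<lambda>x. cscale c (\<phi> (R \<circ> X \<circ> R) x) + \<phi> (R \<circ> Y \<circ> R) x)"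
      unfolding e1 using XY by (intro lm_comb[OF lm] RXR) (auto simp: BH_iff)
    then show "\<mu> (\<lambda>x. cscale c (X x) + Y x) = (\<lambda>x. cscale c (\<mu> X x) + \<mu> Y x)"
      by (simp add: \<mu>_def fun_eq_iff bop_add_arg[OF Ri(1)] bop_cscale_arg[OF Ri(1)])
  qed
  have pmu: "positive_map \<mu>"
    unfolding positive_map_def
  proof (intro ballI impI)
    fix X :: "'a \<Rightarrow> 'a" assume "X \<in> BH" "positive_op X"
    then have "positive_op (R \<circ> X \<circ> R)" by (intro sandwich_pos R(2,3))
    then have "positive_op (\<phi> (R \<circ> X \<circ> R))" by (rule pm_pos[OF pm])
    then show "positive_op (\<mu> X)" unfolding \<mu>_def by (intro sandwich_pos Ri(1) saRi)
  qed
  have wmu: "wstar_continuous \<mu>"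
  proof -
    have c1: "continuous_map wstar_top wstar_top (\<lambda>X. R \<circ> X \<circ> R)"
      by (rule continuous_map_sandwich[OF R(2) R(2)])
    have c2: "continuous_map wstar_top wstar_top (\<lambda>X. Ri \<circ> X \<circ> Ri)"
      by (rule continuous_map_sandwich[OF Ri(1) Ri(1)])
    have c3: "continuous_map wstar_top wstar_top \<phi>" using wc by (simp add: wstar_continuous_def)
    have "continuous_map wstar_top wstar_top ((\<lambda>Y. Ri \<circ> Y \<circ> Ri) \<circ> \<phi> \<circ> (\<lambda>X. R \<circ> X \<circ> R))"
      using continuous_map_compose[OF c1 continuous_map_compose[OF c3 c2]] by (simp add: comp_assoc)
    moreover have "(\<lambda>Y. Ri \<circ> Y \<circ> Ri) \<circ> \<phi> \<circ> (\<lambda>X. R \<circ> X \<circ> R) = \<mu>" by (simp add: \<mu>_def fun_eq_iff)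
    ultimately show ?thesis by (simp add: wstar_continuous_def)
  qed
  have RIR: "R \<circ> op_id \<circ> R = Q" by (simp add: fun_eq_iff op_id_def R(4))
  have mu1: "\<mu> op_id = op_id"
  proof -
    have "\<mu> op_id = Ri \<circ> Q \<circ> Ri" by (simp add: \<mu>_def RIR Q(3))
    also have "... = op_id" by (simp add: fun_eq_iff op_id_def R(4)[symmetric] Ri1)
    finally show ?thesis .
  qed
  have sim: "similar \<phi> \<mu>"
    unfolding similar_def
  proof (intro exI[of _ R] conjI ballI)
    show "invertible_op R" by (rule R(1))
    fix X :: "'a \<Rightarrow> 'a" assume "X \<in> BH"
    show "\<phi> (R \<circ> X \<circ> adjoint R) = R \<circ> \<mu> X \<circ> adjoint R"
      by (simp add: adjR \<mu>_def fun_eq_iff Ri1)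
  qed
  show ?thesis using lmu pmu wmu mu1 sim by (auto simp: wstar_pos_linear_def)
qed

lemma ssum_prod_summable: assumes "ssum xs" "ssum ys"
  shows "summable (\<lambda>n. norm (xs n) * norm (ys n))"
proof (rule summable_comparison_test[of _ "\<lambda>n. (norm (xs n))^2 + (norm (ys n))^2"])
  show "\<exists>N. \<forall>n\<ge>N. norm (norm (xs n) * norm (ys n)) \<le> (norm (xs n))\<^sup>2 + (norm (ys n))\<^sup>2"
  proof (intro exI allI impI)
    fix n
    have a: "0 \<le> norm (xs n) * norm (ys n)" by simp
    have "2 * norm (xs n) * norm (ys n) \<le> (norm (xs n))\<^sup>2 + (norm (ys n))\<^sup>2" by (rule sum_squares_bound)
    then have "2 * (norm (xs n) * norm (ys n)) \<le> (norm (xs n))\<^sup>2 + (norm (ys n))\<^sup>2" by (simp add: mult.assoc)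
    then show "norm (norm (xs n) * norm (ys n)) \<le> (norm (xs n))\<^sup>2 + (norm (ys n))\<^sup>2"
      using a by (simp only: real_norm_def abs_of_nonneg[OF a])
  qed
  show "summable (\<lambda>n. (norm (xs n))\<^sup>2 + (norm (ys n))\<^sup>2)"
    using assms by (intro summable_add) (auto simp: ssum_def)
qed

lemma sw_tendsto:
  fixes T :: "'k \<Rightarrow> 'a::complex_hilbert \<Rightarrow> 'a"
  assumes xs: "ssum xs" and ys: "ssum ys" and M: "0 \<le> M"
    and bnd: "\<And>k x y. cmod (cinner x (T k y)) \<le> M * norm x * norm y"
    and lim: "\<And>x y. ((\<lambda>k. cinner x (T k y)) \<longlongrightarrow> cinner x (Q y)) F"
    and F: "F \<noteq> bot"
  shows "((\<lambda>k. sw_functional xs ys (T k)) \<longlongrightarrow> sw_functional xs ys Q) F"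
proof -
  have sp: "summable (\<lambda>n. M * (norm (xs n) * norm (ys n)))"
    by (intro summable_mult ssum_prod_summable xs ys)
  have bndQ: "cmod (cinner x (Q y)) \<le> M * norm x * norm y" for x y
    by (rule tendsto_upperbound[OF tendsto_norm[OF lim] _ F]) (simp add: bnd)
  have sQ: "summable (\<lambda>n. cinner (xs n) (Q (ys n)))"
  proof (rule summable_comparison_test[OF _ sp], intro exI allI impI)
    fix n :: nat
    show "norm (cinner (xs n) (Q (ys n))) \<le> M * (norm (xs n) * norm (ys n))"
      using bndQ[of "xs n" "ys n"] by (simp add: mult.assoc)
  qed
  show ?thesis
  proof (rule swap_uniform_limit'[where F=sequentially and S=UNIV])
    show "\<forall>\<^sub>F N in sequentially. ((\<lambda>k. \<Sum>n<N. cinner (xs n) (T k (ys n))) \<longlongrightarrow> (\<Sum>n<N. cinner (xs n) (Q (ys n)))) F"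
      by (intro always_eventually allI tendsto_sum lim)
    show "(\<lambda>N. \<Sum>n<N. cinner (xs n) (Q (ys n))) \<longlonglongrightarrow> sw_functional xs ys Q"
      unfolding sw_functional_def by (rule summable_LIMSEQ[OF sQ])
    show "uniform_limit UNIV (\<lambda>N k. \<Sum>n<N. cinner (xs n) (T k (ys n))) (\<lambda>k. sw_functional xs ys (T k)) sequentially"
      unfolding sw_functional_def
      by (rule Weierstrass_m_test[OF _ sp]) (metis bnd mult.assoc)
  qed auto
qed

section \<open>The density filter\<close>

definition dnull :: "nat set \<Rightarrow> bool" where
  "dnull A \<longleftrightarrow> (\<forall>\<delta>>0. \<exists>K0. \<forall>K\<ge>K0. real (card {k\<in>A. k < K}) \<le> \<delta> * real K)"

lemma finite_below: "finite {k\<in>A. k < (K::nat)}"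
  by (rule finite_subset[of _ "{..<K}"]) auto

lemma dnull_subset: assumes "dnull B" "A \<subseteq> B" shows "dnull A"
  unfolding dnull_def
proof (intro allI impI)
  fix \<delta> :: real assume "\<delta> > 0"
  then obtain K0 where K0: "\<forall>K\<ge>K0. real (card {k\<in>B. k < K}) \<le> \<delta> * real K" using assms(1) dnull_def by blast
  have "card {k\<in>A. k < K} \<le> card {k\<in>B. k < K}" for K
    using assms(2) by (intro card_mono finite_below) auto
  then show "\<exists>K0. \<forall>K\<ge>K0. real (card {k\<in>A. k < K}) \<le> \<delta> * real K"
    using K0 by (meson of_nat_le_iff order_trans)
qed

lemma dnull_Un: assumes "dnull A" "dnull B" shows "dnull (A \<union> B)"
  unfolding dnull_def
proof (intro allI impI)
  fix \<delta> :: real assume d: "\<delta> > 0"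
  obtain K1 where K1: "\<forall>K\<ge>K1. real (card {k\<in>A. k < K}) \<le> (\<delta>/2) * real K"
    using assms(1) d unfolding dnull_def by (meson half_gt_zero)
  obtain K2 where K2: "\<forall>K\<ge>K2. real (card {k\<in>B. k < K}) \<le> (\<delta>/2) * real K"
    using assms(2) d unfolding dnull_def by (meson half_gt_zero)
  show "\<exists>K0. \<forall>K\<ge>K0. real (card {k\<in>A \<union> B. k < K}) \<le> \<delta> * real K"
  proof (intro exI[of _ "max K1 K2"] allI impI)
    fix K assume "max K1 K2 \<le> K"
    have "{k\<in>A \<union> B. k < K} = {k\<in>A. k < K} \<union> {k\<in>B. k < K}" by auto
    then have "card {k\<in>A \<union> B. k < K} \<le> card {k\<in>A. k < K} + card {k\<in>B. k < K}"
      by (simp add: card_Un_le)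
    then have "real (card {k\<in>A \<union> B. k < K}) \<le> real (card {k\<in>A. k < K}) + real (card {k\<in>B. k < K})"
      by linarith
    also have "... \<le> (\<delta>/2) * real K + (\<delta>/2) * real K" using K1 K2 \<open>max K1 K2 \<le> K\<close> by (intro add_mono) auto
    finally show "real (card {k\<in>A \<union> B. k < K}) \<le> \<delta> * real K" by simp
  qed
qed

lemma dnull_finite: assumes "finite A" shows "dnull A"
  unfolding dnull_def
proof (intro allI impI)
  fix \<delta> :: real assume d: "\<delta> > 0"
  define K0 where "K0 = nat \<lceil>real (card A) / \<delta>\<rceil>"
  show "\<exists>K0. \<forall>K\<ge>K0. real (card {k\<in>A. k < K}) \<le> \<delta> * real K"
  proof (intro exI[of _ K0] allI impI)
    fix K assume K: "K0 \<le> K"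
    have "card {k\<in>A. k < K} \<le> card A" using assms by (intro card_mono) auto
    moreover have "real (card A) \<le> \<delta> * real K"
    proof -
      have "real (card A) / \<delta> \<le> real K0" unfolding K0_def by linarith
      also have "... \<le> real K" using K by simp
      finally show ?thesis using d by (simp add: field_simps)
    qed
    ultimately show "real (card {k\<in>A. k < K}) \<le> \<delta> * real K" by linarith
  qed
qed

lemma not_dnull_UNIV: "\<not> dnull UNIV"
proof
  assume "dnull UNIV"
  then obtain K0 where K0: "\<forall>K\<ge>K0. real (card {k\<in>(UNIV::nat set). k < K}) \<le> (1/2) * real K"
    unfolding dnull_def by (meson half_gt_zero zero_less_one)
  define K where "K = Suc K0"
  have "{k\<in>(UNIV::nat set). k < K} = {..<K}" by auto
  then have "real K \<le> (1/2) * real K" using K0[rule_format, of K] by (simp add: K_def)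
  then show False by (simp add: K_def)
qed

definition dens :: "nat filter" where "dens = Abs_filter (\<lambda>P. dnull {k. \<not> P k})"

lemma eventually_dens: "eventually P dens \<longleftrightarrow> dnull {k. \<not> P k}"
  unfolding dens_def
proof (rule eventually_Abs_filter, rule is_filter.intro)
  show "dnull {k. \<not> True}" by (simp add: dnull_finite)
  fix P Q :: "nat \<Rightarrow> bool"
  show "dnull {k. \<not> P k} \<Longrightarrow> dnull {k. \<not> Q k} \<Longrightarrow> dnull {k. \<not> (P k \<and> Q k)}"
    using dnull_Un[of "{k. \<not> P k}" "{k. \<not> Q k}"] by (simp add: Collect_disj_eq[symmetric])
  show "\<forall>x. P x \<longrightarrow> Q x \<Longrightarrow> dnull {k. \<not> P k} \<Longrightarrow> dnull {k. \<not> Q k}"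
    by (metis (mono_tags, lifting) dnull_subset mem_Collect_eq subsetI)
qed

lemma dens_ne_bot: "dens \<noteq> bot"
  unfolding trivial_limit_def eventually_dens using not_dnull_UNIV by simp

lemma dens_le_sequentially: "dens \<le> sequentially"
  unfolding le_filter_def eventually_dens eventually_sequentially
proof (intro allI impI)
  fix P :: "nat \<Rightarrow> bool" assume "\<exists>N. \<forall>n\<ge>N. P n"
  then obtain N where "\<forall>n\<ge>N. P n" by blast
  then have "{k. \<not> P k} \<subseteq> {..<N}" by (auto simp: not_less[symmetric])
  then show "dnull {k. \<not> P k}" by (intro dnull_subset[OF dnull_finite[of "{..<N}"]]) auto
qed

lemma dens_avg_zero:
  fixes s :: "nat \<Rightarrow> real"
  assumes s: "\<And>k. 0 \<le> s k" and C: "\<And>K. (\<Sum>k<K. s k) \<le> C * real K"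
  shows "((\<lambda>k. s k / real k) \<longlongrightarrow> 0) dens"
proof (rule tendstoI)
  fix \<epsilon> :: real assume e: "\<epsilon> > 0"
  define A where "A = {k. \<not> dist (s k / real k) 0 < \<epsilon>}"
  have Ak: "s k \<ge> \<epsilon> * real k" if "k \<in> A" for k
  proof (cases "k = 0")
    case True then show ?thesis by (simp add: s)
  next
    case False
    then have "\<epsilon> \<le> s k / real k" using that s[of k] by (simp add: A_def)
    then show ?thesis using False by (simp add: field_simps)
  qed
  have C0: "0 \<le> C" using C[of 1] s[of 0] by simp
  have "dnull A"
    unfolding dnull_def
  proof (intro allI impI)
    fix \<delta> :: real assume dpos: "\<delta> > 0"
    define d where "d = \<delta> / 2"
    have d: "d > 0" using dpos by (simp add: d_def)
    define K0 where "K0 = Suc (nat \<lceil>(1 + C / (\<epsilon> * d)) / d\<rceil>)"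
    show "\<exists>K0. \<forall>K\<ge>K0. real (card {k\<in>A. k < K}) \<le> \<delta> * real K"
    proof (intro exI[of _ K0] allI impI)
      fix K assume K: "K0 \<le> K"
      have Kpos: "real K > 0" using K by (simp add: K0_def)
      have Kbig: "(1 + C / (\<epsilon> * d)) / d \<le> real K"
      proof -
        have "(1 + C / (\<epsilon> * d)) / d \<le> real (nat \<lceil>(1 + C / (\<epsilon> * d)) / d\<rceil>)"
          by (rule real_nat_ceiling_ge)
        also have "nat \<lceil>(1 + C / (\<epsilon> * d)) / d\<rceil> \<le> K" using K unfolding K0_def by linarith
        then have "real (nat \<lceil>(1 + C / (\<epsilon> * d)) / d\<rceil>) \<le> real K" by (rule of_nat_mono)
        finally show ?thesis .
      qed
      define L where "L = nat \<lceil>d * real K\<rceil>"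
      define B where "B = {k\<in>A. L \<le> k \<and> k < K}"
      have sub: "{k\<in>A. k < K} \<subseteq> {..<L} \<union> B" by (auto simp: B_def)
      have fB: "finite B" by (rule finite_subset[of _ "{..<K}"]) (auto simp: B_def)
      have cardB: "real (card B) \<le> C / (\<epsilon> * d)"
      proof -
        have "real (card B) * (\<epsilon> * d * real K) = (\<Sum>k\<in>B. \<epsilon> * d * real K)" by simp
        also have "... \<le> (\<Sum>k\<in>B. s k)"
        proof (rule sum_mono)
          fix k assume k: "k \<in> B"
          have "d * real K \<le> real L" unfolding L_def by linarith
          also have "... \<le> real k" using k by (simp add: B_def)
          finally have "\<epsilon> * (d * real K) \<le> \<epsilon> * real k" using e by (intro mult_left_mono) auto
          also have "... \<le> s k" using Ak k by (simp add: B_def)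
          finally show "\<epsilon> * d * real K \<le> s k" by (simp add: mult.assoc)
        qed
        also have "... \<le> (\<Sum>k<K. s k)" by (rule sum_mono2) (auto simp: B_def s)
        also have "... \<le> C * real K" by (rule C)
        finally have "real (card B) * (\<epsilon> * d * real K) \<le> C * real K" .
        then have "real (card B) * (\<epsilon> * d) \<le> C" using Kpos by (simp add: mult.assoc mult.commute[of _ "real K"])
        then show ?thesis using e d by (simp add: field_simps)
      qed
      have cardL: "real L \<le> d * real K + 1"
      proof -
        have "0 \<le> d * real K" using d Kpos by simp
        then have "0 \<le> \<lceil>d * real K\<rceil>" by simp
        then have "real L = of_int \<lceil>d * real K\<rceil>" unfolding L_def by simp
        then show ?thesis using of_int_ceiling_le_add_one[of "d * real K"] by linarith
      qed
      have "card {k\<in>A. k < K} \<le> card ({..<L} \<union> B)" by (rule card_mono[OF _ sub]) (simp add: fB)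
      also have "... \<le> card {..<L} + card B" by (rule card_Un_le)
      finally have "real (card {k\<in>A. k < K}) \<le> real L + real (card B)" by simp
      also have "... \<le> d * real K + 1 + C / (\<epsilon> * d)" using cardL cardB by simp
      also have "... \<le> d * real K + d * real K"
      proof -
        have "1 + C / (\<epsilon> * d) \<le> d * real K" using Kbig d by (simp add: field_simps)
        then show ?thesis by simp
      qed
      also have "... = \<delta> * real K" by (simp add: d_def)
      finally show "real (card {k\<in>A. k < K}) \<le> \<delta> * real K" .
    qed
  qed
  then show "\<forall>\<^sub>F k in dens. dist (s k / real k) 0 < \<epsilon>" unfolding eventually_dens A_def .
qed

lemma polar:
  assumes "bop Z"
  shows "cinner x (Z y) = (cinner (x + y) (Z (x + y)) - cinner (x - y) (Z (x - y))
     - \<i> * cinner (x + cJ y) (Z (x + cJ y)) + \<i> * cinner (x - cJ y) (Z (x - cJ y))) / 4"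
  by (simp add: bop_add_arg[OF assms] bop_diff_arg[OF assms] bop_cJ[OF assms] cinner_add_left cinner_add_right
      cinner_diff_left cinner_diff_right cinner_cJ_left cinner_cJ_right algebra_simps)

lemma pos_bound_cinner:
  assumes "positive_op X" "op_le X (op_scal r)" "0 \<le> r"
  shows "cmod (cinner x (X y)) \<le> r * norm x * norm y"
proof -
  have "(cmod (cinner x (X y)))^2 \<le> inner x (X x) * inner y (X y)" by (rule pos_CS[OF assms(1)])
  also have "... \<le> (r * (norm x)^2) * (r * (norm y)^2)"
    using assms by (intro mult_mono) (auto simp: op_le_scal_right positive_op_iff)
  also have "... = (r * norm x * norm y)^2" by (simp add: power_mult_distrib power2_eq_square)
  finally show ?thesis by (rule power2_le_imp_le) (use assms(3) in simp)
qed

lemma bop_cesaro: assumes "linear_map \<phi>" "bop P" shows "bop (cesaro \<phi> k P)"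
proof -
  have "bop (\<lambda>x. \<Sum>j<k. (\<phi>^^j) P x)" by (rule bop_sum) (rule lm_pow_bop[OF assms])
  then show ?thesis unfolding cesaro_def by (rule bop_scaleR)
qed

lemma sum_shift_diff: "(\<Sum>j<k. g (Suc j)) = (\<Sum>j<k. g j) + g k - (g 0 :: 'b::ab_group_add)"
  by (induction k) (simp_all add: algebra_simps)

lemma phi_cesaro:
  assumes lm: "linear_map \<phi>" and bP: "bop P"
  shows "\<phi> (cesaro \<phi> k P) = (\<lambda>z. cesaro \<phi> k P z + (1 / real k) *\<^sub>R ((\<phi>^^k) P z - P z))"
proof -
  have bs: "bop (\<lambda>x. \<Sum>j<k. (\<phi>^^j) P x)" by (rule bop_sum) (rule lm_pow_bop[OF lm bP])
  have "\<phi> (cesaro \<phi> k P) = (\<lambda>z. (1/real k) *\<^sub>R \<phi> (\<lambda>x. \<Sum>j<k. (\<phi>^^j) P x) z)"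
    unfolding cesaro_def by (rule lm_scaleR[OF lm bs])
  also have "\<phi> (\<lambda>x. \<Sum>j<k. (\<phi>^^j) P x) = (\<lambda>x. \<Sum>j<k. \<phi> ((\<phi>^^j) P) x)"
    by (rule lm_sum[OF lm]) (rule lm_pow_bop[OF lm bP])
  also have "(\<lambda>x. \<Sum>j<k. \<phi> ((\<phi>^^j) P) x) = (\<lambda>x. \<Sum>j<k. (\<phi>^^Suc j) P x)" by simp
  also have "(\<lambda>x. \<Sum>j<k. (\<phi>^^Suc j) P x) = (\<lambda>x. (\<Sum>j<k. (\<phi>^^j) P x) + (\<phi>^^k) P x - P x)"
    using sum_shift_diff[of "\<lambda>j. (\<phi>^^j) P x" k for x] by (simp add: fun_eq_iff)
  finally show ?thesis by (simp add: cesaro_def fun_eq_iff algebra_simps)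
qed

lemma compact_discs: "compact (Pi\<^sub>E UNIV (\<lambda>i. cball (0::complex) (r i)))"
proof -
  have "compactin (product_topology (\<lambda>i. euclidean) UNIV) (Pi\<^sub>E UNIV (\<lambda>i. cball (0::complex) (r i)))"
    by (simp add: compactin_PiE)
  then show ?thesis by (simp add: euclidean_product_topology)
qed

lemma C3_C6:
  fixes \<phi> :: "('a::complex_hilbert \<Rightarrow> 'a) \<Rightarrow> ('a \<Rightarrow> 'a)"
  assumes wpl: "wstar_pos_linear \<phi>" and ab: "0 < a" "a \<le> b" and P: "invertible_op P" "positive_op P"
    and bnds: "\<forall>k\<ge>1. op_le (op_scal a) (cesaro \<phi> k P) \<and> op_le (cesaro \<phi> k P) (op_scal b)"
  shows "\<exists>Q. invertible_op Q \<and> positive_op Q \<and> \<phi> Q = Q \<and> op_le (op_scal a) Q \<and> op_le Q (op_scal b)"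
proof -
  have lm: "linear_map \<phi>" and pm: "positive_map \<phi>" and wc: "continuous_map wstar_top wstar_top \<phi>"
    using wpl by (auto simp: wstar_pos_linear_def wstar_continuous_def)
  have bP: "bop P" using P by (simp add: positive_op_iff)
  have b0: "0 \<le> b" using ab by simp
  define T where "T k = cesaro \<phi> k P" for k
  have bT: "bop (T k)" for k unfolding T_def by (rule bop_cesaro[OF lm bP])
  have T0: "T 0 = (\<lambda>x. 0)" by (simp add: T_def cesaro_def)
  have Ta: "op_le (op_scal a) (T k)" and Tb: "op_le (T k) (op_scal b)" if "k \<ge> 1" for k
    using bnds that by (auto simp: T_def)
  have posT: "positive_op (T k)" if "k \<ge> 1" for k
  proof -
    have "a * (norm x)^2 \<le> inner x (T k x)" "inner (cJ x) (T k x) = 0" for x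
      using Ta[OF that] by (auto simp: op_le_scal_left)
    moreover have "0 \<le> a * (norm x)^2" for x :: 'a using ab by simp
    ultimately show ?thesis using bT by (auto simp: positive_op_iff intro: order_trans)
  qed
  have bndT: "cmod (cinner x (T k y)) \<le> b * norm x * norm y" for k x y
  proof (cases "k = 0")
    case True then show ?thesis using b0 by (simp add: T0)
  next
    case False
    then have "k \<ge> 1" by simp
    then show ?thesis by (intro pos_bound_cinner posT Tb b0)
  qed
  define \<Lambda> :: "nat \<Rightarrow> ('a \<times> 'a) \<Rightarrow> complex" where "\<Lambda> k = (\<lambda>(x,y). cinner x (T k y))" for k
  define Kset where "Kset = Pi\<^sub>E UNIV (\<lambda>i::'a \<times> 'a. cball (0::complex) (b * norm (fst i) * norm (snd i)))"
  have cK: "compact Kset" unfolding Kset_def by (rule compact_discs)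
  have \<Lambda>K: "\<Lambda> k \<in> Kset" for k
    by (auto simp: Kset_def PiE_UNIV_domain \<Lambda>_def bndT)
  have "filtermap \<Lambda> dens \<noteq> bot" using dens_ne_bot by (simp add: filtermap_bot_iff)
  moreover have "eventually (\<lambda>v. v \<in> Kset) (filtermap \<Lambda> dens)" by (simp add: eventually_filtermap \<Lambda>K)
  ultimately obtain L where L: "L \<in> Kset" "inf (nhds L) (filtermap \<Lambda> dens) \<noteq> bot"
    using cK unfolding compact_filter by blast
  define U where "U = inf (filtercomap \<Lambda> (nhds L)) dens"
  have Une: "U \<noteq> bot"
  proof
    assume "U = bot"
    then have "eventually (\<lambda>_. False) U" by simp
    then obtain Q1 R1 where QR: "eventually Q1 (filtercomap \<Lambda> (nhds L))" "eventually R1 dens" "\<forall>k. Q1 k \<and> R1 k \<longrightarrow> False"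
      unfolding U_def eventually_inf by blast
    then obtain Q' where Q': "eventually Q' (nhds L)" "\<forall>k. Q' (\<Lambda> k) \<longrightarrow> Q1 k"
      unfolding eventually_filtercomap by blast
    have "eventually (\<lambda>k. \<not> Q' (\<Lambda> k)) dens" using QR(2,3) Q'(2) by (auto elim: eventually_mono)
    then have "eventually (\<lambda>v. \<not> Q' v) (filtermap \<Lambda> dens)" by (simp add: eventually_filtermap)
    then have "eventually (\<lambda>_. False) (inf (nhds L) (filtermap \<Lambda> dens))"
      using Q'(1) unfolding eventually_inf by blast
    then show False using L(2) by (simp add: trivial_limit_def)
  qed
  have Ule: "U \<le> dens" by (simp add: U_def)
  have Ules: "U \<le> sequentially" using Ule dens_le_sequentially by (rule order_trans)
  have flim: "filterlim \<Lambda> (nhds L) U" by (simp add: U_def filterlim_iff_le_filtercomap)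
  have \<Lambda>L: "((\<lambda>k. \<Lambda> k i) \<longlongrightarrow> L i) U" for i
  proof -
    have "continuous_on UNIV (\<lambda>v::('a \<times> 'a) \<Rightarrow> complex. v i)"
      by (rule continuous_on_product_coordinates)
    from continuous_on_tendsto_compose[OF this flim] show ?thesis by simp
  qed
  define B where "B x y = L (x, y)" for x y
  have lim: "((\<lambda>k. cinner x (T k y)) \<longlongrightarrow> B x y) U" for x y
    using \<Lambda>L[of "(x, y)"] by (simp add: \<Lambda>_def B_def)
  have addL: "B (x + x') y = B x y + B x' y" for x x' y
    by (rule tendsto_unique[OF Une lim]) (simp add: cinner_add_left tendsto_add[OF lim lim])
  have addR: "B x (y + y') = B x y + B x y'" for x y y'
    by (rule tendsto_unique[OF Une lim]) (simp add: bop_add_arg[OF bT] cinner_add_right tendsto_add[OF lim lim])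
  have scL: "B (cscale c x) y = cnj c * B x y" for c x y
    by (rule tendsto_unique[OF Une lim]) (simp add: cinner_cscale_left tendsto_mult_left[OF lim])
  have scR: "B x (cscale c y) = c * B x y" for c x y
    by (rule tendsto_unique[OF Une lim]) (simp add: bop_cscale_arg[OF bT] cinner_cscale_right tendsto_mult_left[OF lim])
  have bndB: "cmod (B x y) \<le> b * norm x * norm y" for x y
    by (rule tendsto_upperbound[OF tendsto_norm[OF lim] _ Une]) (simp add: bndT)
  obtain Q where Q: "bop Q" "\<forall>x y. B x y = cinner x (Q y)"
    using sesq_rep[OF addL scL addR scR bndB b0] by blast
  have limQ: "((\<lambda>k. cinner x (T k y)) \<longlongrightarrow> cinner x (Q y)) U" for x y using lim Q(2) by simp
  have evk: "\<forall>\<^sub>F k in U. k \<ge> 1"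
    using Ules by (rule filter_leD) (auto simp: eventually_sequentially)
  have limRe: "((\<lambda>k. inner u (T k v)) \<longlongrightarrow> inner u (Q v)) U" for u v
    using tendsto_Re[OF limQ[of u v]] by simp
  have limIm: "((\<lambda>k. inner (cJ u) (T k v)) \<longlongrightarrow> inner (cJ u) (Q v)) U" for u v
    using tendsto_Im[OF limQ[of u v]] by simp
  have Qlo: "a * (norm x)^2 \<le> inner x (Q x)" for x
    by (rule tendsto_lowerbound[OF limRe _ Une]) (use evk Ta in \<open>auto elim: eventually_mono simp: op_le_scal_left\<close>)
  have Qhi: "inner x (Q x) \<le> b * (norm x)^2" for x
    by (rule tendsto_upperbound[OF limRe _ Une]) (use evk Tb in \<open>auto elim: eventually_mono simp: op_le_scal_right\<close>)
  have QIm: "inner (cJ x) (Q x) = 0" for x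
  proof -
    have "\<forall>\<^sub>F k in U. inner (cJ x) (T k x) = 0" using evk Ta by (auto elim: eventually_mono simp: op_le_scal_left)
    then have "((\<lambda>k. inner (cJ x) (T k x)) \<longlongrightarrow> 0) U" by (rule tendsto_eventually)
    then show ?thesis using tendsto_unique[OF Une limIm] by blast
  qed
  have Qa: "op_le (op_scal a) Q" using Qlo QIm by (simp add: op_le_scal_left)
  have Qb: "op_le Q (op_scal b)" using Qhi QIm by (simp add: op_le_scal_right)
  have Qpos: "positive_op Q"
  proof -
    have "0 \<le> inner x (Q x)" for x using Qlo[of x] ab by (meson order_trans zero_le_mult_iff zero_le_power2 less_imp_le)
    then show ?thesis using Q(1) QIm by (simp add: positive_op_iff)
  qed
  have Qinv: "invertible_op Q" by (rule pos_bounds_invertible[OF Qpos ab(1) Qa Qb])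
  have Tlim: "limitin wstar_top T Q U"
  proof (rule limitin_wstarI)
    show "Q \<in> BH" using Q(1) by (simp add: BH_iff)
    show "\<forall>\<^sub>F k in U. T k \<in> BH" using bT by (simp add: BH_iff)
    fix xs ys :: "nat \<Rightarrow> 'a" assume "ssum xs" "ssum ys"
    then show "((\<lambda>k. sw_functional xs ys (T k)) \<longlongrightarrow> sw_functional xs ys Q) U"
      by (rule sw_tendsto[OF _ _ b0 bndT limQ Une])
  qed
  have "limitin wstar_top (\<phi> \<circ> T) (\<phi> Q) U" by (rule continuous_map_limit[OF wc Tlim])
  then have limphi: "((\<lambda>k. cinner x (\<phi> (T k) y)) \<longlongrightarrow> cinner x (\<phi> Q y)) U" for x y
    using limitin_wstarD[OF _ ssum_single ssum_single, of "\<phi> \<circ> T" "\<phi> Q" U x y]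
    by (simp add: sw_single lm_bop[OF lm bT] lm_bop[OF lm Q(1)])
  define Z where "Z k = (\<phi>^^k) P" for k
  have posZ: "positive_op (Z k)" for k unfolding Z_def by (rule pm_pow_pos[OF lm pm P(2)])
  have hq: "((\<lambda>k. of_real (1 / real k) * cinner u (Z k u)) \<longlongrightarrow> 0) dens" for u
  proof -
    define s where "s k = inner u (Z k u)" for k
    have s0: "0 \<le> s k" for k using posZ by (simp add: s_def positive_op_iff)
    have sC: "(\<Sum>k<K. s k) \<le> (b * (norm u)^2) * real K" for K
    proof (cases "K = 0")
      case True then show ?thesis by simp
    next
      case False
      have "inner u (T K u) = (1 / real K) * (\<Sum>k<K. s k)"
        by (simp add: T_def cesaro_def inner_sum_right s_def Z_def)
      moreover have "inner u (T K u) \<le> b * (norm u)^2" using Tb[of K] False by (simp add: op_le_scal_right)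
      ultimately have e: "(\<Sum>k<K. s k) = real K * inner u (T K u)" "inner u (T K u) \<le> b * (norm u)^2"
        using False by (simp_all add: field_simps)
      have "real K * inner u (T K u) \<le> real K * (b * (norm u)^2)" by (rule mult_left_mono) (use e in auto)
      then show ?thesis using e by (simp add: mult_ac)
    qed
    have "((\<lambda>k. s k / real k) \<longlongrightarrow> 0) dens" by (rule dens_avg_zero[OF s0 sC])
    then have "((\<lambda>k. complex_of_real (s k / real k)) \<longlongrightarrow> complex_of_real 0) dens" by (rule tendsto_of_real)
    then have l0: "((\<lambda>k. complex_of_real (s k / real k)) \<longlongrightarrow> 0) dens" by (simp only: of_real_0)
    have fe: "(\<lambda>k. of_real (1 / real k) * cinner u (Z k u)) = (\<lambda>k. complex_of_real (s k / real k))"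
    proof
      fix k
      show "of_real (1 / real k) * cinner u (Z k u) = complex_of_real (s k / real k)"
        using posZ[of k] by (simp add: complex_eq_iff s_def positive_op_iff)
    qed
    show ?thesis unfolding fe by (rule l0)
  qed
  have z1: "((\<lambda>k. of_real (1 / real k) * cinner x (Z k y)) \<longlongrightarrow> 0) U" for x y
  proof -
    let ?G = "\<lambda>u k. of_real (1 / real k) * cinner u (Z k u)"
    have l: "((\<lambda>k. (?G (x + y) k - ?G (x - y) k - \<i> * ?G (x + cJ y) k + \<i> * ?G (x - cJ y) k) / 4)
            \<longlongrightarrow> (0 - 0 - \<i> * 0 + \<i> * 0) / (4::complex)) dens"
      by (intro tendsto_divide tendsto_add tendsto_diff tendsto_mult tendsto_const hq) simp
    have l0: "(0 - 0 - \<i> * 0 + \<i> * 0) / (4::complex) = 0" by simp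
    have fe: "(\<lambda>k. of_real (1 / real k) * cinner x (Z k y)) =
        (\<lambda>k. (?G (x + y) k - ?G (x - y) k - \<i> * ?G (x + cJ y) k + \<i> * ?G (x - cJ y) k) / 4)"
    proof
      fix k
      show "of_real (1 / real k) * cinner x (Z k y) =
        (?G (x + y) k - ?G (x - y) k - \<i> * ?G (x + cJ y) k + \<i> * ?G (x - cJ y) k) / 4"
        by (subst polar[OF posZ[of k, unfolded positive_op_iff, THEN conjunct1]]) (simp add: algebra_simps)
    qed
    have "((\<lambda>k. of_real (1 / real k) * cinner x (Z k y)) \<longlongrightarrow> 0) dens"
      unfolding fe using l unfolding l0 .
    then show ?thesis using Ule by (rule tendsto_mono[rotated])
  qed
  have z2: "((\<lambda>k. of_real (1 / real k) * cinner x (P y)) \<longlongrightarrow> 0) U" for x y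
  proof -
    have "((\<lambda>k. of_real (1 / real k) * cinner x (P y)) \<longlongrightarrow> of_real 0 * cinner x (P y)) sequentially"
      by (intro tendsto_intros)
    then show ?thesis using Ules by (simp add: tendsto_mono)
  qed
  have eqphi: "cinner x (\<phi> (T k) y) = cinner x (T k y) + (of_real (1 / real k) * cinner x (Z k y)
      - of_real (1 / real k) * cinner x (P y))" for k x y
    by (simp add: T_def phi_cesaro[OF lm bP] cinner_add_right cinner_scaleR_right cinner_diff_right
        Z_def algebra_simps)
  have "((\<lambda>k. cinner x (T k y) + (of_real (1 / real k) * cinner x (Z k y)
      - of_real (1 / real k) * cinner x (P y))) \<longlongrightarrow> cinner x (Q y) + (0 - 0)) U" for x y
    by (intro tendsto_add tendsto_diff limQ z1 z2)
  then have "((\<lambda>k. cinner x (\<phi> (T k) y)) \<longlongrightarrow> cinner x (Q y)) U" for x y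
    by (simp add: eqphi)
  then have "cinner x (\<phi> Q y) = cinner x (Q y)" for x y
    using tendsto_unique[OF Une limphi] by blast
  then have "\<phi> Q = Q" by (intro ext cinner_ext) blast
  then show ?thesis using Qinv Qpos Qa Qb by blast
qed

theorem theorem5p1:
  fixes \<phi> :: "('h::complex_hilbert \<Rightarrow> 'h) \<Rightarrow> ('h \<Rightarrow> 'h)"
  assumes "wstar_pos_linear \<phi>"
  defines "C1 \<equiv> \<exists>\<mu>. wstar_pos_linear \<mu> \<and> \<mu> op_id = op_id \<and> similar \<phi> \<mu>"
    and "C2 \<equiv> \<exists>a b. 0 < a \<and> a \<le> b \<and> (\<forall>k\<ge>1.
            op_le (op_scal a) (cesaro \<phi> k op_id) \<and> op_le (cesaro \<phi> k op_id) (op_scal b))"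
    and "C3 \<equiv> \<exists>a b P. 0 < a \<and> a \<le> b \<and> invertible_op P \<and> positive_op P \<and> (\<forall>k\<ge>1.
            op_le (op_scal a) (cesaro \<phi> k P) \<and> op_le (cesaro \<phi> k P) (op_scal b))"
    and "C4 \<equiv> \<exists>c d. 0 < c \<and> c \<le> d \<and> (\<forall>k\<ge>1.
            op_le (op_scal c) ((\<phi> ^^ k) op_id) \<and> op_le ((\<phi> ^^ k) op_id) (op_scal d))"
    and "C5 \<equiv> \<exists>c d R. 0 < c \<and> c \<le> d \<and> invertible_op R \<and> positive_op R \<and> (\<forall>k\<ge>1.
            op_le (op_scal c) ((\<phi> ^^ k) R) \<and> op_le ((\<phi> ^^ k) R) (op_scal d))"
    and "C6 \<equiv> \<exists>Q. invertible_op Q \<and> positive_op Q \<and> \<phi> Q = Q"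
  shows "(C1 \<longleftrightarrow> C2) \<and> (C2 \<longleftrightarrow> C3) \<and> (C3 \<longleftrightarrow> C4) \<and> (C4 \<longleftrightarrow> C5) \<and> (C5 \<longleftrightarrow> C6)
    \<and> (\<forall>a b P. 0 < a \<and> a \<le> b \<and> invertible_op P \<and> positive_op P \<and> (\<forall>k\<ge>1.
            op_le (op_scal a) (cesaro \<phi> k P) \<and> op_le (cesaro \<phi> k P) (op_scal b))
         \<longrightarrow> (\<exists>Q. invertible_op Q \<and> positive_op Q \<and> \<phi> Q = Q
                  \<and> op_le (op_scal a) Q \<and> op_le Q (op_scal b)))"
proof -
  have lm: "linear_map \<phi>" and pm: "positive_map \<phi>" using assms(1) by (auto simp: wstar_pos_linear_def)
  have c14: "C1 \<Longrightarrow> C4" unfolding C1_def C4_def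
  proof (elim exE conjE)
    fix \<mu> assume h: "wstar_pos_linear \<mu>" "\<mu> op_id = op_id" "similar \<phi> \<mu>"
    show "\<exists>c d. 0 < c \<and> c \<le> d \<and> (\<forall>k\<ge>1. op_le (op_scal c) ((\<phi> ^^ k) op_id) \<and> op_le ((\<phi> ^^ k) op_id) (op_scal d))"
      by (rule C1_C4[OF lm pm _ h(2,3)]) (use h(1) in \<open>simp add: wstar_pos_linear_def\<close>)
  qed
  have c42: "C4 \<Longrightarrow> C2" unfolding C4_def C2_def using C4_C2 by blast
  have c23: "C2 \<Longrightarrow> C3" unfolding C2_def C3_def using C2_C3 by blast
  have mo: "\<forall>a b P. 0 < a \<and> a \<le> b \<and> invertible_op P \<and> positive_op P \<and> (\<forall>k\<ge>1.
            op_le (op_scal a) (cesaro \<phi> k P) \<and> op_le (cesaro \<phi> k P) (op_scal b))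
         \<longrightarrow> (\<exists>Q. invertible_op Q \<and> positive_op Q \<and> \<phi> Q = Q
                  \<and> op_le (op_scal a) Q \<and> op_le Q (op_scal b))"
    using C3_C6[OF assms(1)] by blast
  have c36: "C3 \<Longrightarrow> C6" unfolding C3_def C6_def using mo by blast
  have c65: "C6 \<Longrightarrow> C5" unfolding C6_def C5_def using C6_C5 by blast
  have c54: "C5 \<Longrightarrow> C4" unfolding C5_def C4_def using C5_C4[OF lm pm] by blast
  have c61: "C6 \<Longrightarrow> C1" unfolding C6_def C1_def using C6_C1[OF assms(1)] by blast
  show ?thesis using c14 c42 c23 c36 c65 c54 c61 mo by blast
qed


end
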